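(* Let $G\subset U(V)$ be a finite pseudo reflection group and $\Upsilon$ any admissible parameter set. Then $B_G(\Upsilon)$ is a finite-dimensional $\mathbb C$-algebra, and the linear map $\mathbb CG\to B_G(\Upsilon)$, $w\mapsto T_w$, is an injective algebra homomorphism.
   Context: Let $V$ be a finite-dimensional complex vector space and $G\subset U(V)$ a finite pseudo reflection group (a finite group generated by pseudo reflections, i.e. elements conjugate in $GL(V)$ to $\mathrm{diag}(\xi,1,\dots,1)$ with $\xi\neq1$ a root of unity). Let $R$ be the set of pseudo reflections in $G$ and $\mathcal A=\{H_i\}_{i\in P}$ the set of their reflecting hyperplanes, indexed by a finite set $P$. For $s\in R$ let $i(s)$ be the index with $H_{i(s)}$ the hyperplane fixed pointwise by $s$. $G$ permutes $\mathcal A$; write $w(i)$ for the index with $H_{w(i)}=w(H_i)$ and $i\sim j$ if $j=w(i)$ for some $w\in G$. Put $R(i,j)=\{s\in R: s(H_j)=H_i\}$. For $i\in P$ let $G_i$ be the pointwise stabilizer of $H_i$ in $G$ and $s_i\in G_i$ its unique element with exceptional eigenvalue $e^{2\pi\sqrt{-1}/|G_i|}$. An edge is an intersection of hyperplanes of $\mathcal A$. For $i\ne j$ write $H_i\pitchfork H_j$ if $\{k\in P: H_i\cap H_j\subset H_k\}=\{i,j\}$; a codimension-2 edge $L$ is crossing if $L=H_i\cap H_j$ for some $i,j$ with $H_i\pitchfork H_j$, and noncrossing otherwise. For $w\in G$, $V_w=\{v\in V: wv=v\}$. Admissible parameters $\Upsilon=\{\mu_s,\tau_i\}_{s\in R,i\in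 P}$: $\mu_s\in\mathbb C\setminus\{0\}$ with $\mu_s=\mu_{s'}$ whenever $s,s'$ are conjugate in $G$, and $\tau_i\in\mathbb C$ with $\tau_i=\tau_j$ whenever $i\sim j$. The algebra $B_G(\Upsilon)$ is the unital associative $\mathbb C$-algebra generated by $\{T_w\}_{w\in G}\cup\{e_i\}_{i\in P}$ with $T_1=1$ and relations: (0) $T_{w_1}T_{w_2}=T_{w_1w_2}$; (1) $T_{s_i}e_i=e_iT_{s_i}=e_i$ for $i\in P$; (1') $T_we_i=e_iT_w=e_i$ whenever $w(H_i)=H_i$ and $H_i\cap V_w$ is a noncrossing codimension-2 edge; (2) $e_i^2=\tau_ie_i$; (3) $T_we_j=e_iT_w$ whenever $w(H_j)=H_i$; (4) $e_ie_j=e_je_i$ if $H_i\pitchfork H_j$; (5) $e_ie_j=(\sum_{s\in R(i,j)}\mu_sT_s)e_j=e_i(\sum_{s\in R(i,j)}\mu_sT_s)$ if $i\ne j$, $H_i\cap H_j$ is noncrossing and $R(i,j)\neq\emptyset$; (6) $e_ie_j=0$ if $i\ne j$, $H_i\cap H_j$ is noncrossing and $R(i,j)=\emptyset$. *)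

theory Defs
  imports "Jordan_Normal_Form.VS_Connect" "Jordan_Normal_Form.Schur_Decomposition"
begin

section \<open>Linear-algebraic setting: V = C^n with the standard Hermitian product\<close>

definition unitary_mat :: "nat \<Rightarrow> complex mat \<Rightarrow> bool" where
  "unitary_mat n A \<longleftrightarrow> A \<in> carrier_mat n n \<and> A * mat_adjoint A = 1\<^sub>m n"

definition diag_pr :: "nat \<Rightarrow> complex \<Rightarrow> complex mat" where
  "diag_pr n xi = mat n n (\<lambda>(i,j). if i = j then (if i = 0 then xi else 1) else 0)"

definition pseudo_reflection :: "nat \<Rightarrow> complex mat \<Rightarrow> bool" where
  "pseudo_reflection n s \<longleftrightarrow> 0 < n \<and> s \<in> carrier_mat n n \<and>
     (\<exists>P \<in> carrier_mat n n. \<exists>Q \<in> carrier_mat n n. P * Q = 1\<^sub>m n \<and> Q * P = 1\<^sub>m n \<and>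
        (\<exists>xi. xi \<noteq> 1 \<and> (\<exists>k::nat. 0 < k \<and> xi ^ k = 1) \<and> Q * s * P = diag_pr n xi))"

text \<open>subgroup generated: for a finite group this is the submonoid generated\<close>
inductive_set gen_monoid :: "nat \<Rightarrow> complex mat set \<Rightarrow> complex mat set"
  for n :: nat and S :: "complex mat set" where
  one: "1\<^sub>m n \<in> gen_monoid n S"
| step: "s \<in> S \<Longrightarrow> x \<in> gen_monoid n S \<Longrightarrow> s * x \<in> gen_monoid n S"

definition refls :: "nat \<Rightarrow> complex mat set \<Rightarrow> complex mat set" where
  "refls n G = {s \<in> G. pseudo_reflection n s}"

definition finite_pseudo_reflection_group :: "nat \<Rightarrow> complex mat set \<Rightarrow> bool" where
  "finite_pseudo_reflection_group n G \<longleftrightarrow>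
     finite G \<and> G \<subseteq> carrier_mat n n \<and> 1\<^sub>m n \<in> G \<and>
     (\<forall>A\<in>G. \<forall>B\<in>G. A * B \<in> G) \<and> (\<forall>A\<in>G. \<exists>B\<in>G. A * B = 1\<^sub>m n) \<and>
     (\<forall>A\<in>G. unitary_mat n A) \<and>
     G = gen_monoid n (refls n G)"

definition fix_space :: "nat \<Rightarrow> complex mat \<Rightarrow> complex vec set" where
  "fix_space n w = {v \<in> carrier_vec n. w *\<^sub>v v = v}"

text \<open>the reflecting hyperplanes (they serve as their own indices, P = A)\<close>
definition hyps :: "nat \<Rightarrow> complex mat set \<Rightarrow> complex vec set set" where
  "hyps n G = fix_space n ` refls n G"

definition img :: "complex mat \<Rightarrow> complex vec set \<Rightarrow> complex vec set" where
  "img w H = (\<lambda>v. w *\<^sub>v v) ` H"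

definition hyp_equiv :: "complex mat set \<Rightarrow> complex vec set \<Rightarrow> complex vec set \<Rightarrow> bool" where
  "hyp_equiv G H K \<longleftrightarrow> (\<exists>w\<in>G. img w H = K)"

definition R_between :: "nat \<Rightarrow> complex mat set \<Rightarrow> complex vec set \<Rightarrow> complex vec set \<Rightarrow> complex mat set" where
  "R_between n G H K = {s \<in> refls n G. img s K = H}"

definition pw_stab :: "complex mat set \<Rightarrow> complex vec set \<Rightarrow> complex mat set" where
  "pw_stab G H = {w \<in> G. \<forall>v\<in>H. w *\<^sub>v v = v}"

definition dist_refl :: "nat \<Rightarrow> complex mat set \<Rightarrow> complex vec set \<Rightarrow> complex mat" where
  "dist_refl n G H = (THE s. s \<in> pw_stab G H \<and>
     (\<exists>v \<in> carrier_vec n. v \<noteq> 0\<^sub>v n \<and>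
        s *\<^sub>v v = exp (2 * pi * \<i> / of_nat (card (pw_stab G H))) \<cdot>\<^sub>v v))"

definition sub_dim :: "nat \<Rightarrow> complex vec set \<Rightarrow> nat" where
  "sub_dim n L = vectorspace.dim class_ring ((module_vec TYPE(complex) n)\<lparr>carrier := L\<rparr>)"

definition is_edge :: "nat \<Rightarrow> complex mat set \<Rightarrow> complex vec set \<Rightarrow> bool" where
  "is_edge n G L \<longleftrightarrow> (\<exists>S. S \<subseteq> hyps n G \<and> S \<noteq> {} \<and> L = \<Inter> S)"

definition codim2_edge :: "nat \<Rightarrow> complex mat set \<Rightarrow> complex vec set \<Rightarrow> bool" where
  "codim2_edge n G L \<longleftrightarrow> is_edge n G L \<and> n - sub_dim n L = 2"

definition transversal :: "nat \<Rightarrow> complex mat set \<Rightarrow> complex vec set \<Rightarrow> complex vec set \<Rightarrow> bool" where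
  "transversal n G H K \<longleftrightarrow> H \<noteq> K \<and> {M \<in> hyps n G. H \<inter> K \<subseteq> M} = {H, K}"

definition crossing_edge :: "nat \<Rightarrow> complex mat set \<Rightarrow> complex vec set \<Rightarrow> bool" where
  "crossing_edge n G L \<longleftrightarrow> codim2_edge n G L \<and>
     (\<exists>H\<in>hyps n G. \<exists>K\<in>hyps n G. transversal n G H K \<and> L = H \<inter> K)"

definition noncrossing_edge :: "nat \<Rightarrow> complex mat set \<Rightarrow> complex vec set \<Rightarrow> bool" where
  "noncrossing_edge n G L \<longleftrightarrow> codim2_edge n G L \<and> \<not> crossing_edge n G L"

definition admissible :: "nat \<Rightarrow> complex mat set \<Rightarrow> (complex mat \<Rightarrow> complex) \<Rightarrow> (complex vec set \<Rightarrow> complex) \<Rightarrow> bool" where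
  "admissible n G mu tau \<longleftrightarrow>
     (\<forall>s\<in>refls n G. mu s \<noteq> 0) \<and>
     (\<forall>s\<in>refls n G. \<forall>s'\<in>refls n G. (\<exists>g\<in>G. g * s = s' * g) \<longrightarrow> mu s = mu s') \<and>
     (\<forall>H\<in>hyps n G. \<forall>K\<in>hyps n G. hyp_equiv G H K \<longrightarrow> tau H = tau K)"

datatype ('a, 'b) gen = Tg 'a | Eg 'b

definition FA :: "'g set \<Rightarrow> ('g list \<Rightarrow> complex) set" where
  "FA Gens = {f. finite {w. f w \<noteq> 0} \<and> (\<forall>w. f w \<noteq> 0 \<longrightarrow> set w \<subseteq> Gens)}"

definition fa_one :: "'g list \<Rightarrow> complex" where
  "fa_one = (\<lambda>w. if w = [] then 1 else 0)"

definition fa_gen :: "'g \<Rightarrow> 'g list \<Rightarrow> complex" where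
  "fa_gen x = (\<lambda>w. if w = [x] then 1 else 0)"

definition fa_add :: "('g list \<Rightarrow> complex) \<Rightarrow> ('g list \<Rightarrow> complex) \<Rightarrow> 'g list \<Rightarrow> complex" where
  "fa_add f g = (\<lambda>w. f w + g w)"

definition fa_sub :: "('g list \<Rightarrow> complex) \<Rightarrow> ('g list \<Rightarrow> complex) \<Rightarrow> 'g list \<Rightarrow> complex" where
  "fa_sub f g = (\<lambda>w. f w - g w)"

definition fa_smult :: "complex \<Rightarrow> ('g list \<Rightarrow> complex) \<Rightarrow> 'g list \<Rightarrow> complex" where
  "fa_smult c f = (\<lambda>w. c * f w)"

definition fa_mult :: "('g list \<Rightarrow> complex) \<Rightarrow> ('g list \<Rightarrow> complex) \<Rightarrow> 'g list \<Rightarrow> complex" where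
  "fa_mult f g = (\<lambda>w. \<Sum>k\<le>length w. f (take k w) * g (drop k w))"

definition fa_lincomb :: "('x \<Rightarrow> complex) \<Rightarrow> ('x \<Rightarrow> 'g list \<Rightarrow> complex) \<Rightarrow> 'x set \<Rightarrow> 'g list \<Rightarrow> complex" where
  "fa_lincomb c b S = (\<lambda>w. \<Sum>x\<in>S. c x * b x w)"

inductive_set fa_ideal :: "'g set \<Rightarrow> ('g list \<Rightarrow> complex) set \<Rightarrow> ('g list \<Rightarrow> complex) set"
  for Gens :: "'g set" and Rel :: "('g list \<Rightarrow> complex) set" where
  base: "r \<in> Rel \<Longrightarrow> r \<in> fa_ideal Gens Rel"
| zero: "(\<lambda>w. 0) \<in> fa_ideal Gens Rel"
| add: "x \<in> fa_ideal Gens Rel \<Longrightarrow> y \<in> fa_ideal Gens Rel \<Longrightarrow> fa_add x y \<in> fa_ideal Gens Rel"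
| smult: "x \<in> fa_ideal Gens Rel \<Longrightarrow> fa_smult c x \<in> fa_ideal Gens Rel"
| lmult: "a \<in> FA Gens \<Longrightarrow> x \<in> fa_ideal Gens Rel \<Longrightarrow> fa_mult a x \<in> fa_ideal Gens Rel"
| rmult: "a \<in> FA Gens \<Longrightarrow> x \<in> fa_ideal Gens Rel \<Longrightarrow> fa_mult x a \<in> fa_ideal Gens Rel"

section \<open>The algebra B_G(Upsilon) = FA(generators) / (relations)\<close>

type_synonym bgen = "(complex mat, complex vec set) gen"

definition B_gens :: "nat \<Rightarrow> complex mat set \<Rightarrow> bgen set" where
  "B_gens n G = Tg ` G \<union> Eg ` hyps n G"

abbreviation TT :: "complex mat \<Rightarrow> bgen list \<Rightarrow> complex" where
  "TT w \<equiv> fa_gen (Tg w)"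

abbreviation EE :: "complex vec set \<Rightarrow> bgen list \<Rightarrow> complex" where
  "EE H \<equiv> fa_gen (Eg H)"

definition B_rels :: "nat \<Rightarrow> complex mat set \<Rightarrow> (complex mat \<Rightarrow> complex) \<Rightarrow> (complex vec set \<Rightarrow> complex)
    \<Rightarrow> (bgen list \<Rightarrow> complex) set" where
  "B_rels n G mu tau =
     {fa_sub (TT (1\<^sub>m n)) fa_one}
   \<union> {fa_sub (fa_mult (TT w1) (TT w2)) (TT (w1 * w2)) | w1 w2. w1 \<in> G \<and> w2 \<in> G}
   \<union> {fa_sub (fa_mult (TT (dist_refl n G H)) (EE H)) (EE H) | H. H \<in> hyps n G}
   \<union> {fa_sub (fa_mult (EE H) (TT (dist_refl n G H))) (EE H) | H. H \<in> hyps n G}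
   \<union> {fa_sub (fa_mult (TT w) (EE H)) (EE H) | w H. w \<in> G \<and> H \<in> hyps n G \<and> img w H = H \<and>
         noncrossing_edge n G (H \<inter> fix_space n w)}
   \<union> {fa_sub (fa_mult (EE H) (TT w)) (EE H) | w H. w \<in> G \<and> H \<in> hyps n G \<and> img w H = H \<and>
         noncrossing_edge n G (H \<inter> fix_space n w)}
   \<union> {fa_sub (fa_mult (EE H) (EE H)) (fa_smult (tau H) (EE H)) | H. H \<in> hyps n G}
   \<union> {fa_sub (fa_mult (TT w) (EE K)) (fa_mult (EE H) (TT w)) | w H K.
         w \<in> G \<and> H \<in> hyps n G \<and> K \<in> hyps n G \<and> img w K = H}
   \<union> {fa_sub (fa_mult (EE H) (EE K)) (fa_mult (EE K) (EE H)) | H K.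
         H \<in> hyps n G \<and> K \<in> hyps n G \<and> transversal n G H K}
   \<union> {fa_sub (fa_mult (EE H) (EE K))
         (fa_mult (fa_lincomb mu TT (R_between n G H K)) (EE K)) | H K.
         H \<in> hyps n G \<and> K \<in> hyps n G \<and> H \<noteq> K \<and> noncrossing_edge n G (H \<inter> K) \<and>
         R_between n G H K \<noteq> {}}
   \<union> {fa_sub (fa_mult (EE H) (EE K))
         (fa_mult (EE H) (fa_lincomb mu TT (R_between n G H K))) | H K.
         H \<in> hyps n G \<and> K \<in> hyps n G \<and> H \<noteq> K \<and> noncrossing_edge n G (H \<inter> K) \<and>
         R_between n G H K \<noteq> {}}
   \<union> {fa_mult (EE H) (EE K) | H K.
         H \<in> hyps n G \<and> K \<in> hyps n G \<and> H \<noteq> K \<and> noncrossing_edge n G (H \<inter> K) \<and>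
         R_between n G H K = {}}"

definition B_ideal :: "nat \<Rightarrow> complex mat set \<Rightarrow> (complex mat \<Rightarrow> complex) \<Rightarrow> (complex vec set \<Rightarrow> complex)
    \<Rightarrow> (bgen list \<Rightarrow> complex) set" where
  "B_ideal n G mu tau = fa_ideal (B_gens n G) (B_rels n G mu tau)"

end

theory Submission
  imports Defs "Jordan_Normal_Form.Matrix_Kernel"
begin


lemma diag_pr_mult_vec:
  assumes "u \<in> carrier_vec n" "0 < n"
  shows "diag_pr n xi *\<^sub>v u = vec n (\<lambda>i. if i = 0 then xi * u $ 0 else u $ i)"
proof (rule eq_vecI)
  fix i assume i: "i < dim_vec (vec n (\<lambda>i. if i = 0 then xi * u $ 0 else u $ i))"
  hence i: "i < n" by simp
  have "(diag_pr n xi *\<^sub>v u) $ i = (\<Sum>j<n. (if i = j then (if i = 0 then xi else 1) else 0) * u $ j)"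
    using i assms unfolding diag_pr_def
    by (simp add: mult_mat_vec_def scalar_prod_def lessThan_atLeast0 del: One_nat_def)
  also have "\<dots> = (if i = 0 then xi else 1) * u $ i"
    using i by (simp add: if_distrib[of "\<lambda>x. x * _"] cong: if_cong)
  finally show "(diag_pr n xi *\<^sub>v u) $ i = vec n (\<lambda>i. if i = 0 then xi * u $ 0 else u $ i) $ i"
    using i by simp
qed (use assms in \<open>auto simp: diag_pr_def\<close>)

lemma hyp_rep:
  assumes "pseudo_reflection n s"
  shows "\<exists>a\<in>carrier_vec n. a \<noteq> 0\<^sub>v n \<and> fix_space n s = {v\<in>carrier_vec n. a \<bullet> v = 0}"
proof -
  from assms obtain P Q xi k where n: "0 < n" and s: "s \<in> carrier_mat n n"
    and P: "P \<in> carrier_mat n n" and Q: "Q \<in> carrier_mat n n" and PQ: "P * Q = 1\<^sub>m n" and QP: "Q * P = 1\<^sub>m n"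
    and xi: "xi \<noteq> 1" and D: "Q * s * P = diag_pr n xi"
    unfolding pseudo_reflection_def by blast
  define a where "a = row Q 0"
  have a: "a \<in> carrier_vec n" using Q n unfolding a_def by auto
  have "(Q * P) $$ (0,0) = a \<bullet> col P 0" using Q P n unfolding a_def by simp
  hence a1: "a \<bullet> col P 0 = 1" using QP n by simp
  have a0: "a \<noteq> 0\<^sub>v n"
  proof
    assume "a = 0\<^sub>v n" thus False using a1 P n by simp
  qed
  have Dc: "diag_pr n xi \<in> carrier_mat n n" unfolding diag_pr_def by simp
  have sD: "s = P * diag_pr n xi * Q"
  proof -
    have "P * diag_pr n xi * Q = P * (Q * s * P) * Q" using D by simp
    also have "\<dots> = (P * Q) * s * (P * Q)" using P Q s
      by (simp add: assoc_mult_mat[of _ n n _ n _ n])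
    also have "\<dots> = s" using PQ s by simp
    finally show ?thesis by simp
  qed
  have "fix_space n s = {v\<in>carrier_vec n. a \<bullet> v = 0}"
  proof (intro equalityI subsetI)
    fix v assume "v \<in> fix_space n s"
    hence v: "v \<in> carrier_vec n" and sv: "s *\<^sub>v v = v" unfolding fix_space_def by auto
    have "Q *\<^sub>v (s *\<^sub>v v) = Q *\<^sub>v v" using sv by simp
    moreover have "Q *\<^sub>v (s *\<^sub>v v) = diag_pr n xi *\<^sub>v (Q *\<^sub>v v)"
    proof -
      have "Q *\<^sub>v (s *\<^sub>v v) = (Q * s) *\<^sub>v v" using Q s v by simp
      also have "Q * s = Q * s * P * Q" using P Q s QP PQ
        by (metis assoc_mult_mat mult_carrier_mat right_mult_one_mat)
      also have "(Q * s * P * Q) *\<^sub>v v = diag_pr n xi *\<^sub>v (Q *\<^sub>v v)" using D Q v Dc by simp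
      finally show ?thesis .
    qed
    ultimately have eq: "diag_pr n xi *\<^sub>v (Q *\<^sub>v v) = Q *\<^sub>v v" by simp
    have "(diag_pr n xi *\<^sub>v (Q *\<^sub>v v)) $ 0 = xi * (Q *\<^sub>v v) $ 0"
      using diag_pr_mult_vec[of "Q *\<^sub>v v" n xi] Q v n by simp
    with eq have "xi * (Q *\<^sub>v v) $ 0 = (Q *\<^sub>v v) $ 0" by simp
    hence "(Q *\<^sub>v v) $ 0 = 0" using xi
      by (metis mult_cancel_right2)
    thus "v \<in> {v\<in>carrier_vec n. a \<bullet> v = 0}" using v Q n unfolding a_def by simp
  next
    fix v assume "v \<in> {v\<in>carrier_vec n. a \<bullet> v = 0}"
    hence v: "v \<in> carrier_vec n" and av: "a \<bullet> v = 0" by auto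
    have Qv0: "(Q *\<^sub>v v) $ 0 = 0" using av Q v n unfolding a_def by simp
    have Qvc: "Q *\<^sub>v v \<in> carrier_vec n" using Q v by simp
    have dq: "diag_pr n xi *\<^sub>v (Q *\<^sub>v v) = Q *\<^sub>v v"
      unfolding diag_pr_mult_vec[OF Qvc n] using Qv0 Qvc Q by (intro eq_vecI) auto
    have "s *\<^sub>v v = P *\<^sub>v (diag_pr n xi *\<^sub>v (Q *\<^sub>v v))"
      unfolding sD using P Q v Dc by (simp add: assoc_mult_mat_vec[of _ n n _ n])
    also have "\<dots> = P *\<^sub>v (Q *\<^sub>v v)" using dq by simp
    also have "\<dots> = v" using P Q v PQ by (simp flip: assoc_mult_mat_vec)
    finally show "v \<in> fix_space n s" using v unfolding fix_space_def by simp
  qed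
  thus ?thesis using a a0 by blast
qed

lemma vec_nonzero_comp:
  assumes "c \<in> carrier_vec n" "c \<noteq> 0\<^sub>v n"
  shows "\<exists>j<n. c $ j \<noteq> 0"
proof (rule ccontr)
  assume "\<not> ?thesis"
  hence "c = 0\<^sub>v n" using assms by (intro eq_vecI) auto
  thus False using assms by simp
qed

lemma ker_incl:
  fixes a c :: "complex vec"
  assumes a: "a \<in> carrier_vec n" and c: "c \<in> carrier_vec n" and c0: "c \<noteq> 0\<^sub>v n"
    and incl: "\<forall>v\<in>carrier_vec n. c \<bullet> v = 0 \<longrightarrow> a \<bullet> v = 0"
  shows "\<exists>l. \<forall>v\<in>carrier_vec n. a \<bullet> v = l * (c \<bullet> v)"
proof -
  obtain j where j: "j < n" "c $ j \<noteq> 0" using vec_nonzero_comp[OF c c0] by blast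
  define u :: "complex vec" where "u = unit_vec n j"
  have u: "u \<in> carrier_vec n" unfolding u_def by simp
  have cu: "c \<bullet> u = c $ j" "a \<bullet> u = a $ j" unfolding u_def using j by auto
  show ?thesis
  proof (intro exI ballI)
    fix v :: "complex vec" assume v: "v \<in> carrier_vec n"
    define w where "w = v - ((c \<bullet> v) / c $ j) \<cdot>\<^sub>v u"
    have wc: "w \<in> carrier_vec n" unfolding w_def using v u by simp
    have "c \<bullet> w = c \<bullet> v - ((c \<bullet> v) / c $ j) * (c \<bullet> u)"
      unfolding w_def using v u c by (simp add: scalar_prod_minus_distrib[of c n])
    also have "\<dots> = 0" using cu j by simp
    finally have "a \<bullet> w = 0" using incl wc by blast
    moreover have "a \<bullet> w = a \<bullet> v - ((c \<bullet> v) / c $ j) * (a \<bullet> u)"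
      unfolding w_def using v u a by (simp add: scalar_prod_minus_distrib[of a n])
    ultimately show "a \<bullet> v = (a $ j / c $ j) * (c \<bullet> v)" using cu by simp
  qed
qed

lemma hyper_eq:
  fixes a c :: "complex vec"
  assumes a: "a \<in> carrier_vec n" and a0: "a \<noteq> 0\<^sub>v n" and c: "c \<in> carrier_vec n" and c0: "c \<noteq> 0\<^sub>v n"
    and incl: "{v\<in>carrier_vec n. c \<bullet> v = 0} \<subseteq> {v\<in>carrier_vec n. a \<bullet> v = 0}"
  shows "{v\<in>carrier_vec n. c \<bullet> v = 0} = {v\<in>carrier_vec n. a \<bullet> v = 0}"
proof -
  obtain l where l: "\<forall>v\<in>carrier_vec n. a \<bullet> v = l * (c \<bullet> v)"
    using ker_incl[OF a c c0] incl by blast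
  obtain j where j: "j < n" "a $ j \<noteq> 0" using vec_nonzero_comp[OF a a0] by blast
  have "a \<bullet> unit_vec n j = l * (c \<bullet> unit_vec n j)" using l j unit_vec_carrier by blast
  hence "l \<noteq> 0" using j by auto
  thus ?thesis using l by auto
qed

lemma one_row_false:
  fixes a b c :: "complex vec"
  assumes a: "a \<in> carrier_vec n" and a0: "a \<noteq> 0\<^sub>v n" and b: "b \<in> carrier_vec n" and b0: "b \<noteq> 0\<^sub>v n"
    and ne: "{v\<in>carrier_vec n. a \<bullet> v = 0} \<noteq> {v\<in>carrier_vec n. b \<bullet> v = 0}"
    and c: "c \<in> carrier_vec n"
    and incl: "{v\<in>carrier_vec n. c \<bullet> v = 0} \<subseteq> {v\<in>carrier_vec n. a \<bullet> v = 0} \<inter> {v\<in>carrier_vec n. b \<bullet> v = 0}"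
  shows False
proof (cases "c = 0\<^sub>v n")
  case True
  obtain j where j: "j < n" "a $ j \<noteq> 0" using vec_nonzero_comp[OF a a0] by blast
  have "unit_vec n j \<in> {v\<in>carrier_vec n. c \<bullet> v = 0}" using True j by simp
  hence "a \<bullet> unit_vec n j = 0" using incl by blast
  thus False using j by simp
next
  case False
  have "{v\<in>carrier_vec n. c \<bullet> v = 0} = {v\<in>carrier_vec n. a \<bullet> v = 0}"
    by (rule hyper_eq[OF a a0 c False]) (use incl in blast)
  moreover have "{v\<in>carrier_vec n. c \<bullet> v = 0} = {v\<in>carrier_vec n. b \<bullet> v = 0}"
    by (rule hyper_eq[OF b b0 c False]) (use incl in blast)
  ultimately show False using ne by simp
qed

lemma codim2_dim:
  fixes a b :: "complex vec"
  assumes a: "a \<in> carrier_vec n" and a0: "a \<noteq> 0\<^sub>v n" and b: "b \<in> carrier_vec n" and b0: "b \<noteq> 0\<^sub>v n"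
    and ne: "{v\<in>carrier_vec n. a \<bullet> v = 0} \<noteq> {v\<in>carrier_vec n. b \<bullet> v = 0}"
  shows "n - sub_dim n ({v\<in>carrier_vec n. a \<bullet> v = 0} \<inter> {v\<in>carrier_vec n. b \<bullet> v = 0}) = 2"
proof -
  let ?HA = "{v\<in>carrier_vec n. a \<bullet> v = 0}" and ?HB = "{v\<in>carrier_vec n. b \<bullet> v = 0}"
  note orf = one_row_false[OF a a0 b b0 ne]
  define M where "M = mat_of_rows n [a, b]"
  have M: "M \<in> carrier_mat 2 n" unfolding M_def using mat_of_rows_carrier(1)[of n "[a,b]"] by (simp add: numeral_2_eq_2)
  have rM: "row M 0 = a" "row M 1 = b" unfolding M_def using a b by (auto intro!: mat_of_rows_row)
  have kM: "mat_kernel M = ?HA \<inter> ?HB"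
  proof -
    have "v \<in> carrier_vec n \<Longrightarrow> (M *\<^sub>v v = 0\<^sub>v 2) = (a \<bullet> v = 0 \<and> b \<bullet> v = 0)" for v
    proof
      assume v: "v \<in> carrier_vec n" and "M *\<^sub>v v = 0\<^sub>v 2"
      hence "(M *\<^sub>v v) $ 0 = 0" "(M *\<^sub>v v) $ 1 = 0" by auto
      thus "a \<bullet> v = 0 \<and> b \<bullet> v = 0" using M rM by simp
    next
      assume v: "v \<in> carrier_vec n" and "a \<bullet> v = 0 \<and> b \<bullet> v = 0"
      thus "M *\<^sub>v v = 0\<^sub>v 2" using M rM
        by (intro eq_vecI) (auto simp: less_2_cases_iff)
    qed
    thus ?thesis using M unfolding mat_kernel_def by auto
  qed
  obtain C where gj: "gauss_jordan_single M = C" by simp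
  note G = gauss_jordan_single[OF M gj]
  have C: "C \<in> carrier_mat 2 n" using G by simp
  have kC: "mat_kernel C = mat_kernel M" using G(1) M C unfolding mat_kernel_def by auto
  define c0 where "c0 = row C 0"
  define c1 where "c1 = row C 1"
  have c0: "c0 \<in> carrier_vec n" and c1: "c1 \<in> carrier_vec n" unfolding c0_def c1_def using C by auto
  have kC2: "mat_kernel C = {v\<in>carrier_vec n. c0 \<bullet> v = 0 \<and> c1 \<bullet> v = 0}"
  proof -
    have "v \<in> carrier_vec n \<Longrightarrow> (C *\<^sub>v v = 0\<^sub>v 2) = (c0 \<bullet> v = 0 \<and> c1 \<bullet> v = 0)" for v
    proof
      assume v: "v \<in> carrier_vec n" and "C *\<^sub>v v = 0\<^sub>v 2"
      hence "(C *\<^sub>v v) $ 0 = 0" "(C *\<^sub>v v) $ 1 = 0" by auto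
      thus "c0 \<bullet> v = 0 \<and> c1 \<bullet> v = 0" using C unfolding c0_def c1_def by simp
    next
      assume v: "v \<in> carrier_vec n" and "c0 \<bullet> v = 0 \<and> c1 \<bullet> v = 0"
      thus "C *\<^sub>v v = 0\<^sub>v 2" using C unfolding c0_def c1_def
        by (intro eq_vecI) (auto simp: less_2_cases_iff)
    qed
    thus ?thesis using C unfolding mat_kernel_def by auto
  qed
  have "c1 \<noteq> 0\<^sub>v n"
  proof
    assume "c1 = 0\<^sub>v n"
    hence "mat_kernel C = {v\<in>carrier_vec n. c0 \<bullet> v = 0}" unfolding kC2 using c0 by auto
    thus False using orf[OF c0] kC kM by simp
  qed
  moreover have "c0 \<noteq> 0\<^sub>v n"
  proof
    assume "c0 = 0\<^sub>v n"
    hence "mat_kernel C = {v\<in>carrier_vec n. c1 \<bullet> v = 0}" unfolding kC2 using c1 by auto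
    thus False using orf[OF c1] kC kM by simp
  qed
  ultimately have "{i. i < 2 \<and> row C i \<noteq> 0\<^sub>v n} = {0, 1}"
    unfolding c0_def c1_def by (auto simp: less_2_cases_iff)
  hence card: "card {i. i < 2 \<and> row C i \<noteq> 0\<^sub>v n} = 2" by simp
  interpret K: kernel 2 n C by (unfold_locales, rule C)
  have "K.dim = n - 2" using find_base_vectors(6)[OF G(3) C] card by simp
  moreover have "K.dim = sub_dim n (?HA \<inter> ?HB)" unfolding sub_dim_def kC kM[symmetric] ..
  moreover have "2 \<le> n"
  proof (rule ccontr)
    assume "\<not> 2 \<le> n"
    moreover have "n \<noteq> 0"
    proof
      assume "n = 0" hence "a = 0\<^sub>v n" using a by (intro eq_vecI) auto
      thus False using a0 by simp
    qed
    ultimately have n1: "n = 1" by simp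
    let ?u = "unit_vec n 0 :: complex vec"
    have sp: "x \<in> carrier_vec n \<Longrightarrow> y \<in> carrier_vec n \<Longrightarrow> x \<bullet> y = x $ 0 * y $ 0" for x y :: "complex vec"
      using n1 unfolding scalar_prod_def by simp
    have "{v\<in>carrier_vec n. ?u \<bullet> v = 0} \<subseteq> ?HA \<inter> ?HB"
      using sp[OF a] sp[OF b] n1 by auto
    thus False using orf[of ?u] by simp
  qed
  ultimately show ?thesis by simp
qed

context
  fixes n :: nat and G :: "complex mat set"
  assumes fprg: "finite_pseudo_reflection_group n G"
begin

lemma G_carrier: "g \<in> G \<Longrightarrow> g \<in> carrier_mat n n"
  using fprg unfolding finite_pseudo_reflection_group_def by auto

lemma G_one: "1\<^sub>m n \<in> G"
  using fprg unfolding finite_pseudo_reflection_group_def by auto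

lemma G_mult: "g \<in> G \<Longrightarrow> h \<in> G \<Longrightarrow> g * h \<in> G"
  using fprg unfolding finite_pseudo_reflection_group_def by auto

lemma G_finite: "finite G"
  using fprg unfolding finite_pseudo_reflection_group_def by auto

lemma G_inv: "g \<in> G \<Longrightarrow> \<exists>h\<in>G. g * h = 1\<^sub>m n \<and> h * g = 1\<^sub>m n"
proof -
  assume g: "g \<in> G"
  then obtain h where h: "h \<in> G" "g * h = 1\<^sub>m n"
    using fprg unfolding finite_pseudo_reflection_group_def by blast
  moreover have "h * g = 1\<^sub>m n"
    using mat_mult_left_right_inverse[OF G_carrier[OF g] G_carrier[OF h(1)] h(2)] .
  ultimately show ?thesis by blast
qed

lemma refls_G: "refls n G \<subseteq> G"
  unfolding refls_def by auto

lemma hyps_finite: "finite (hyps n G)"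
  unfolding hyps_def using G_finite refls_G finite_subset by blast

lemma hyps_rep: "H \<in> hyps n G \<Longrightarrow> \<exists>a\<in>carrier_vec n. a \<noteq> 0\<^sub>v n \<and> H = {v\<in>carrier_vec n. a \<bullet> v = 0}"
  unfolding hyps_def refls_def using hyp_rep by auto

lemma hyps_subset: "H \<in> hyps n G \<Longrightarrow> H \<subseteq> carrier_vec n"
  unfolding hyps_def fix_space_def by auto

lemma dichotomy:
  assumes H: "H \<in> hyps n G" and K: "K \<in> hyps n G" and ne: "H \<noteq> K"
    and nt: "\<not> transversal n G H K"
  shows "noncrossing_edge n G (H \<inter> K)"
proof -
  obtain a where a: "a \<in> carrier_vec n" "a \<noteq> 0\<^sub>v n" "H = {v\<in>carrier_vec n. a \<bullet> v = 0}"
    using hyps_rep[OF H] by blast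
  obtain b where b: "b \<in> carrier_vec n" "b \<noteq> 0\<^sub>v n" "K = {v\<in>carrier_vec n. b \<bullet> v = 0}"
    using hyps_rep[OF K] by blast
  have "n - sub_dim n (H \<inter> K) = 2"
    using codim2_dim[OF a(1,2) b(1,2)] ne a(3) b(3) by simp
  moreover have "is_edge n G (H \<inter> K)"
    unfolding is_edge_def using H K by (intro exI[of _ "{H, K}"]) auto
  ultimately have c2: "codim2_edge n G (H \<inter> K)" unfolding codim2_edge_def by simp
  have "\<not> crossing_edge n G (H \<inter> K)"
  proof
    assume "crossing_edge n G (H \<inter> K)"
    then obtain H' K' where H': "H' \<in> hyps n G" "K' \<in> hyps n G" and tr: "transversal n G H' K'"
      and eq: "H \<inter> K = H' \<inter> K'" unfolding crossing_edge_def by blast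
    from tr have set: "{M \<in> hyps n G. H' \<inter> K' \<subseteq> M} = {H', K'}" and ne': "H' \<noteq> K'"
      unfolding transversal_def by auto
    have "H \<in> {H', K'}" "K \<in> {H', K'}" using set eq H K by blast+
    hence "{H, K} = {H', K'}" using ne ne' by auto
    hence "transversal n G H K" unfolding transversal_def using ne set eq by simp
    thus False using nt by simp
  qed
  thus ?thesis using c2 unfolding noncrossing_edge_def by simp
qed

lemma img_hyps:
  assumes g: "g \<in> G" and H: "H \<in> hyps n G"
  shows "img g H \<in> hyps n G"
proof -
  obtain s where s: "s \<in> refls n G" and Hs: "H = fix_space n s" using H unfolding hyps_def by auto
  obtain h where h: "h \<in> G" "g * h = 1\<^sub>m n" "h * g = 1\<^sub>m n" using G_inv[OF g] by blast
  have sG: "s \<in> G" and ps: "pseudo_reflection n s" using s unfolding refls_def by auto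
  have gc: "g \<in> carrier_mat n n" and hc: "h \<in> carrier_mat n n" and sc: "s \<in> carrier_mat n n"
    using G_carrier g h sG by auto
  define t where "t = g * s * h"
  have tG: "t \<in> G" unfolding t_def using G_mult g h sG by blast
  from ps obtain P Q xi where n: "0 < n"
    and P: "P \<in> carrier_mat n n" and Q: "Q \<in> carrier_mat n n" and PQ: "P * Q = 1\<^sub>m n" and QP: "Q * P = 1\<^sub>m n"
    and xi: "xi \<noteq> 1 \<and> (\<exists>k::nat. 0 < k \<and> xi ^ k = 1)" and D: "Q * s * P = diag_pr n xi"
    unfolding pseudo_reflection_def by blast
  have tc: "t \<in> carrier_mat n n" unfolding t_def using gc hc sc by simp
  have e1: "g * P * (Q * h) = 1\<^sub>m n"
  proof -
    have "g * P * (Q * h) = g * (P * Q) * h" using gc P Q hc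
      by (simp add: assoc_mult_mat[of _ n n _ n _ n])
    thus ?thesis using PQ h gc by simp
  qed
  have e2: "Q * h * (g * P) = 1\<^sub>m n"
  proof -
    have "Q * h * (g * P) = Q * (h * g) * P" using gc P Q hc
      by (simp add: assoc_mult_mat[of _ n n _ n _ n])
    thus ?thesis using QP h Q by simp
  qed
  have e3: "Q * h * t * (g * P) = diag_pr n xi"
  proof -
    have "Q * h * t * (g * P) = Q * (h * g) * s * (h * g) * P" unfolding t_def using gc P Q hc sc
      by (simp add: assoc_mult_mat[of _ n n _ n _ n])
    thus ?thesis using D h Q sc by simp
  qed
  have gP: "g * P \<in> carrier_mat n n" and Qh: "Q * h \<in> carrier_mat n n" using gc P Q hc by auto
  have "pseudo_reflection n t"
    unfolding pseudo_reflection_def using n tc gP Qh e1 e2 e3 xi by blast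
  hence "t \<in> refls n G" using tG unfolding refls_def by simp
  moreover have "fix_space n t = img g H"
  proof (intro equalityI subsetI)
    fix v assume "v \<in> fix_space n t"
    hence v: "v \<in> carrier_vec n" and tv: "t *\<^sub>v v = v" unfolding fix_space_def by auto
    have "s *\<^sub>v (h *\<^sub>v v) = h *\<^sub>v (t *\<^sub>v v)"
    proof -
      have "h *\<^sub>v (t *\<^sub>v v) = (h * t) *\<^sub>v v" using hc tc v by simp
      also have "h * t = (h * g) * s * h" unfolding t_def using gc hc sc
        by (simp add: assoc_mult_mat[of _ n n _ n _ n])
      also have "\<dots> = s * h" using h sc by simp
      finally show ?thesis using sc hc v by simp
    qed
    hence "s *\<^sub>v (h *\<^sub>v v) = h *\<^sub>v v" using tv by simp
    hence "h *\<^sub>v v \<in> H" unfolding Hs fix_space_def using hc v by simp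
    moreover have "g *\<^sub>v (h *\<^sub>v v) = v" using gc hc v h
      by (simp flip: assoc_mult_mat_vec)
    ultimately show "v \<in> img g H" unfolding img_def by (metis image_eqI)
  next
    fix v assume "v \<in> img g H"
    then obtain u where u: "u \<in> carrier_vec n" "s *\<^sub>v u = u" and vu: "v = g *\<^sub>v u"
      unfolding img_def Hs fix_space_def by auto
    have "t *\<^sub>v v = g *\<^sub>v (s *\<^sub>v ((h * g) *\<^sub>v u))"
      unfolding t_def vu using gc hc sc u by (simp add: assoc_mult_mat_vec[of _ n n _ n])
    also have "\<dots> = v" using h u vu by simp
    finally show "v \<in> fix_space n t" unfolding fix_space_def vu using gc u by simp
  qed
  ultimately show ?thesis unfolding hyps_def by force
qed

end


definition mnm :: "'g list \<Rightarrow> 'g list \<Rightarrow> complex" where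
  "mnm u = (\<lambda>w. if w = u then 1 else 0)"

lemma fa_gen_mono: "fa_gen x = mnm [x]"
  unfolding fa_gen_def mnm_def ..

lemma fa_one_mono: "fa_one = mnm []"
  unfolding fa_one_def mnm_def ..

lemma mono_mult: "fa_mult (mnm u) (mnm v) = mnm (u @ v)"
proof
  fix w :: "'a list"
  have "fa_mult (mnm u) (mnm v) w = (\<Sum>k\<le>length w. if k = length u \<and> w = u @ v then 1 else 0)"
    unfolding fa_mult_def mnm_def
  proof (rule sum.cong[OF refl])
    fix k assume k: "k \<in> {..length w}"
    have "(take k w = u \<and> drop k w = v) = (k = length u \<and> w = u @ v)"
    proof
      assume h: "take k w = u \<and> drop k w = v"
      hence "w = u @ v" by (metis append_take_drop_id)
      moreover have "length u = min k (length w)" using h by auto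
      ultimately show "k = length u \<and> w = u @ v" using k by auto
    qed auto
    thus "(if take k w = u then 1 else 0) * (if drop k w = v then 1 else 0)
        = (if k = length u \<and> w = u @ v then 1 else (0::complex))" by auto
  qed
  also have "\<dots> = mnm (u @ v) w" unfolding mnm_def
    by (cases "w = u @ v") (auto simp: sum.delta)
  finally show "fa_mult (mnm u) (mnm v) w = mnm (u @ v) w" .
qed

lemma mono_FA: "set u \<subseteq> Gens \<Longrightarrow> mnm u \<in> FA Gens"
  unfolding FA_def mnm_def by auto

lemma fa_mult_sub_right: "fa_mult a (fa_sub f g) = fa_sub (fa_mult a f) (fa_mult a g)"
  unfolding fa_mult_def fa_sub_def by (auto simp: algebra_simps sum_subtractf)

lemma fa_mult_sub_left: "fa_mult (fa_sub f g) a = fa_sub (fa_mult f a) (fa_mult g a)"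
  unfolding fa_mult_def fa_sub_def by (auto simp: algebra_simps sum_subtractf)

lemma fa_mult_lincomb_right:
  "fa_mult a (fa_lincomb c b R) = fa_lincomb c (\<lambda>s. fa_mult a (b s)) R"
  unfolding fa_mult_def fa_lincomb_def
  by (auto simp: sum_distrib_left sum_distrib_right intro!: ext sum.swap[THEN trans] sum.cong simp: ac_simps)

lemma fa_mult_lincomb_left:
  "fa_mult (fa_lincomb c b R) a = fa_lincomb c (\<lambda>s. fa_mult (b s) a) R"
  unfolding fa_mult_def fa_lincomb_def
  by (auto simp: sum_distrib_left sum_distrib_right intro!: ext sum.swap[THEN trans] sum.cong simp: ac_simps)

lemma fa_smult_zero[simp]: "fa_smult d (\<lambda>w. 0) = (\<lambda>w. 0)"
  unfolding fa_smult_def by auto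

lemma fa_mult_zero_right[simp]: "fa_mult a (\<lambda>w. 0) = (\<lambda>w. 0)"
  unfolding fa_mult_def by auto

lemma fa_mult_zero_left[simp]: "fa_mult (\<lambda>w. 0) a = (\<lambda>w. 0)"
  unfolding fa_mult_def by auto

lemma fa_mult_smult_right: "fa_mult a (fa_smult c f) = fa_smult c (fa_mult a f)"
  unfolding fa_mult_def fa_smult_def sum_distrib_left by (intro ext sum.cong) (auto simp: mult.left_commute)

lemma fa_mult_smult_left: "fa_mult (fa_smult c f) a = fa_smult c (fa_mult f a)"
  unfolding fa_mult_def fa_smult_def sum_distrib_left by (intro ext sum.cong) (auto simp: mult.assoc)

lemma fa_mult_add_right: "fa_mult a (fa_add f g) = fa_add (fa_mult a f) (fa_mult a g)"
  unfolding fa_mult_def fa_add_def sum.distrib[symmetric] by (intro ext sum.cong) (auto simp: distrib_left)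

lemma fa_sub_zero: "fa_sub f (\<lambda>w. 0) = f"
  unfolding fa_sub_def by auto

definition fcong :: "'g set \<Rightarrow> ('g list \<Rightarrow> complex) set \<Rightarrow> ('g list \<Rightarrow> complex) \<Rightarrow> ('g list \<Rightarrow> complex) \<Rightarrow> bool" where
  "fcong Gens Rel f g \<longleftrightarrow> fa_sub f g \<in> fa_ideal Gens Rel"

lemma fcong_refl: "fcong Gens Rel f f"
proof -
  have "fa_sub f f = (\<lambda>w. 0)" unfolding fa_sub_def by auto
  thus ?thesis unfolding fcong_def using fa_ideal.zero by simp
qed

lemma fcong_sym: "fcong Gens Rel f g \<Longrightarrow> fcong Gens Rel g f"
proof -
  assume "fcong Gens Rel f g"
  hence "fa_smult (-1) (fa_sub f g) \<in> fa_ideal Gens Rel" unfolding fcong_def by (rule fa_ideal.smult)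
  moreover have "fa_smult (-1) (fa_sub f g) = fa_sub g f" unfolding fa_smult_def fa_sub_def by auto
  ultimately show ?thesis unfolding fcong_def by simp
qed

lemma fcong_trans: "fcong Gens Rel f g \<Longrightarrow> fcong Gens Rel g h \<Longrightarrow> fcong Gens Rel f h"
proof -
  assume "fcong Gens Rel f g" "fcong Gens Rel g h"
  hence "fa_add (fa_sub f g) (fa_sub g h) \<in> fa_ideal Gens Rel" unfolding fcong_def by (rule fa_ideal.add)
  moreover have "fa_add (fa_sub f g) (fa_sub g h) = fa_sub f h" unfolding fa_add_def fa_sub_def by auto
  ultimately show ?thesis unfolding fcong_def by simp
qed

lemma fcong_add: "fcong Gens Rel f1 g1 \<Longrightarrow> fcong Gens Rel f2 g2 \<Longrightarrow> fcong Gens Rel (fa_add f1 f2) (fa_add g1 g2)"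
proof -
  assume "fcong Gens Rel f1 g1" "fcong Gens Rel f2 g2"
  hence "fa_add (fa_sub f1 g1) (fa_sub f2 g2) \<in> fa_ideal Gens Rel" unfolding fcong_def by (rule fa_ideal.add)
  moreover have "fa_add (fa_sub f1 g1) (fa_sub f2 g2) = fa_sub (fa_add f1 f2) (fa_add g1 g2)"
    unfolding fa_add_def fa_sub_def by auto
  ultimately show ?thesis unfolding fcong_def by simp
qed

lemma fcong_smult: "fcong Gens Rel f g \<Longrightarrow> fcong Gens Rel (fa_smult c f) (fa_smult c g)"
proof -
  assume "fcong Gens Rel f g"
  hence "fa_smult c (fa_sub f g) \<in> fa_ideal Gens Rel" unfolding fcong_def by (rule fa_ideal.smult)
  moreover have "fa_smult c (fa_sub f g) = fa_sub (fa_smult c f) (fa_smult c g)"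
    unfolding fa_smult_def fa_sub_def by (auto simp: algebra_simps)
  ultimately show ?thesis unfolding fcong_def by simp
qed

lemma fcong_rel: "r \<in> Rel \<Longrightarrow> r = fa_sub f g \<Longrightarrow> fcong Gens Rel f g"
  unfolding fcong_def using fa_ideal.base by auto

lemma fcong_ctx:
  assumes "a \<in> FA Gens" "b \<in> FA Gens" "fcong Gens Rel f g"
  shows "fcong Gens Rel (fa_mult (fa_mult a f) b) (fa_mult (fa_mult a g) b)"
proof -
  have "fa_mult a (fa_sub f g) \<in> fa_ideal Gens Rel"
    using assms unfolding fcong_def by (intro fa_ideal.lmult[OF assms(1)])
  hence "fa_mult (fa_mult a (fa_sub f g)) b \<in> fa_ideal Gens Rel"
    using assms by (intro fa_ideal.rmult[OF assms(2)])
  thus ?thesis unfolding fcong_def fa_mult_sub_right fa_mult_sub_left .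
qed

lemma fcong_lmult:
  assumes "a \<in> FA Gens" "fcong Gens Rel f g"
  shows "fcong Gens Rel (fa_mult a f) (fa_mult a g)"
  unfolding fcong_def fa_mult_sub_right[symmetric] by (rule fa_ideal.lmult[OF assms(1) assms(2)[unfolded fcong_def]])

lemma fa_lincomb_insert:
  "finite R \<Longrightarrow> x \<notin> R \<Longrightarrow> fa_lincomb c b (insert x R) = fa_add (fa_smult (c x) (b x)) (fa_lincomb c b R)"
  unfolding fa_lincomb_def fa_add_def fa_smult_def by auto

lemma fa_lincomb_empty: "fa_lincomb c b {} = (\<lambda>w. 0)"
  unfolding fa_lincomb_def by auto

lemma fcong_zero_smult: "fcong Gens Rel f (\<lambda>w. 0) \<Longrightarrow> fcong Gens Rel (fa_smult c f) (\<lambda>w. 0)"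
proof -
  assume "fcong Gens Rel f (\<lambda>w. 0)"
  hence "fcong Gens Rel (fa_smult c f) (fa_smult c (\<lambda>w. 0))" by (rule fcong_smult)
  thus ?thesis by simp
qed

lemma fcong_lincomb:
  assumes "finite R" "\<And>s. s \<in> R \<Longrightarrow> fcong Gens Rel (b s) (b' s)"
  shows "fcong Gens Rel (fa_lincomb c b R) (fa_lincomb c b' R)"
  using assms
proof (induction R rule: finite_induct)
  case empty
  then show ?case by (simp add: fa_lincomb_empty fcong_refl)
next
  case (insert x F)
  then show ?case by (simp add: fa_lincomb_insert fcong_add fcong_smult)
qed

inductive_set spn :: "('g list \<Rightarrow> complex) set \<Rightarrow> ('g list \<Rightarrow> complex) set" for X where
  zero: "(\<lambda>w. 0) \<in> spn X"
| step: "x \<in> X \<Longrightarrow> f \<in> spn X \<Longrightarrow> fa_add (fa_smult c x) f \<in> spn X"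

definition SP :: "'g set \<Rightarrow> ('g list \<Rightarrow> complex) set \<Rightarrow> ('g list \<Rightarrow> complex) set \<Rightarrow> ('g list \<Rightarrow> complex) \<Rightarrow> bool" where
  "SP Gens Rel X f \<longleftrightarrow> (\<exists>g\<in>spn X. fcong Gens Rel f g)"

lemma spn_add: "f \<in> spn X \<Longrightarrow> g \<in> spn X \<Longrightarrow> fa_add f g \<in> spn X"
proof (induction f rule: spn.induct)
  case zero
  have "fa_add (\<lambda>w. 0) g = g" unfolding fa_add_def by auto
  then show ?case using zero by simp
next
  case (step x f c)
  have "fa_add (fa_add (fa_smult c x) f) g = fa_add (fa_smult c x) (fa_add f g)"
    unfolding fa_add_def by (auto simp: ac_simps)
  then show ?case using step by (simp add: spn.step)
qed

lemma spn_smult: "f \<in> spn X \<Longrightarrow> fa_smult d f \<in> spn X"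
proof (induction f rule: spn.induct)
  case zero
  show ?case using spn.zero[of X] by simp
next
  case (step x f c)
  have "fa_smult d (fa_add (fa_smult c x) f) = fa_add (fa_smult (d * c) x) (fa_smult d f)"
    unfolding fa_add_def fa_smult_def by (auto simp: algebra_simps)
  then show ?case using step by (simp add: spn.step)
qed

lemma SP_zero: "SP Gens Rel X (\<lambda>w. 0)"
  unfolding SP_def using spn.zero fcong_refl by blast

lemma SP_mem: "x \<in> X \<Longrightarrow> SP Gens Rel X x"
proof -
  assume x: "x \<in> X"
  have "fa_add (fa_smult 1 x) (\<lambda>w. 0) = x" unfolding fa_add_def fa_smult_def by auto
  hence "x \<in> spn X" using spn.step[OF x spn.zero, of 1] by simp
  thus ?thesis unfolding SP_def using fcong_refl by blast
qed

lemma SP_add: "SP Gens Rel X f \<Longrightarrow> SP Gens Rel X g \<Longrightarrow> SP Gens Rel X (fa_add f g)"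
  unfolding SP_def using spn_add fcong_add by blast

lemma SP_smult: "SP Gens Rel X f \<Longrightarrow> SP Gens Rel X (fa_smult c f)"
  unfolding SP_def using spn_smult fcong_smult by blast

lemma SP_cong: "fcong Gens Rel f g \<Longrightarrow> SP Gens Rel X g \<Longrightarrow> SP Gens Rel X f"
  unfolding SP_def using fcong_trans by blast

lemma SP_lincomb:
  assumes "finite R" "\<And>s. s \<in> R \<Longrightarrow> SP Gens Rel X (b s)"
  shows "SP Gens Rel X (fa_lincomb c b R)"
  using assms
proof (induction R rule: finite_induct)
  case empty
  then show ?case by (simp add: fa_lincomb_empty SP_zero)
next
  case (insert x F)
  then show ?case by (simp add: fa_lincomb_insert SP_add SP_smult)
qed

lemma spn_SP: "g \<in> spn X \<Longrightarrow> (\<And>x. x \<in> X \<Longrightarrow> SP Gens Rel Y x) \<Longrightarrow> SP Gens Rel Y g"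
  by (induction g rule: spn.induct) (auto intro: SP_zero SP_add SP_smult)

lemma SP_trans: "SP Gens Rel X f \<Longrightarrow> (\<And>x. x \<in> X \<Longrightarrow> SP Gens Rel Y x) \<Longrightarrow> SP Gens Rel Y f"
  unfolding SP_def[of _ _ X] using spn_SP SP_cong by blast

lemma spn_finite: "g \<in> spn S \<Longrightarrow> finite S \<Longrightarrow> \<exists>c. g = fa_lincomb c (\<lambda>b. b) S"
proof (induction g rule: spn.induct)
  case zero
  show ?case by (rule exI[of _ "\<lambda>_. 0"]) (auto simp: fa_lincomb_def)
next
  case (step x f d)
  then obtain c where c: "f = fa_lincomb c (\<lambda>b. b) S" by blast
  define c' where "c' = c(x := c x + d)"
  have "fa_add (fa_smult d x) f = fa_lincomb c' (\<lambda>b. b) S"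
  proof
    fix w
    have "fa_lincomb c' (\<lambda>b. b) S w = c' x * x w + (\<Sum>y\<in>S - {x}. c' y * y w)"
      unfolding fa_lincomb_def using step by (simp add: sum.remove)
    also have "\<dots> = d * x w + (c x * x w + (\<Sum>y\<in>S - {x}. c y * y w))"
      unfolding c'_def by (simp add: algebra_simps)
    also have "c x * x w + (\<Sum>y\<in>S - {x}. c y * y w) = f w"
      unfolding c fa_lincomb_def using step by (simp add: sum.remove)
    finally show "fa_add (fa_smult d x) f w = fa_lincomb c' (\<lambda>b. b) S w"
      unfolding fa_add_def fa_smult_def by simp
  qed
  thus ?case by blast
qed

lemma SP_finite: "SP Gens Rel S f \<Longrightarrow> finite S \<Longrightarrow> \<exists>c. fa_sub f (fa_lincomb c (\<lambda>b. b) S) \<in> fa_ideal Gens Rel"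
  unfolding SP_def fcong_def using spn_finite by blast

lemma FA_expand: "f \<in> FA Gens \<Longrightarrow> f = fa_lincomb f mnm {w. f w \<noteq> 0}"
proof
  fix w assume f: "f \<in> FA Gens"
  hence fin: "finite {w. f w \<noteq> 0}" unfolding FA_def by auto
  have "fa_lincomb f mnm {w. f w \<noteq> 0} w = (\<Sum>u\<in>{w. f w \<noteq> 0}. if w = u then f u else 0)"
    unfolding fa_lincomb_def mnm_def by (auto intro: sum.cong)
  also have "\<dots> = f w" using fin by (simp add: sum.delta)
  finally show "f w = fa_lincomb f mnm {w. f w \<noteq> 0} w" by simp
qed


lemma spn_mult:
  assumes "g \<in> spn X" "\<And>y. y \<in> X \<Longrightarrow> SP Gens Rel Y (fa_mult a y)"
  shows "SP Gens Rel Y (fa_mult a g)"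
  using assms
proof (induction g rule: spn.induct)
  case zero
  then show ?case by (simp add: SP_zero)
next
  case (step x f c)
  then show ?case by (simp add: fa_mult_add_right fa_mult_smult_right SP_add SP_smult)
qed


definition NF :: "nat \<Rightarrow> complex mat set \<Rightarrow> nat \<Rightarrow> (bgen list \<Rightarrow> complex) set" where
  "NF n G k = {mnm (map Eg hs @ [Tg w]) | hs w. set hs \<subseteq> hyps n G \<and> length hs \<le> k \<and> w \<in> G}"

definition NFall :: "nat \<Rightarrow> complex mat set \<Rightarrow> (bgen list \<Rightarrow> complex) set" where
  "NFall n G = {mnm (map Eg hs @ [Tg w]) | hs w. set hs \<subseteq> hyps n G \<and> w \<in> G}"

context
  fixes n :: nat and G :: "complex mat set" and mu :: "complex mat \<Rightarrow> complex"
    and tau :: "complex vec set \<Rightarrow> complex"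
  assumes fprg: "finite_pseudo_reflection_group n G"
begin

abbreviation "Gs \<equiv> B_gens n G"
abbreviation "Rl \<equiv> B_rels n G mu tau"
abbreviation "cg \<equiv> fcong Gs Rl"

lemma Tg_gen: "g \<in> G \<Longrightarrow> Tg g \<in> Gs"
  unfolding B_gens_def by auto

lemma Eg_gen: "H \<in> hyps n G \<Longrightarrow> Eg H \<in> Gs"
  unfolding B_gens_def by auto

lemma Eg_set: "set hs \<subseteq> hyps n G \<Longrightarrow> set (map Eg hs) \<subseteq> Gs"
  using Eg_gen by auto

lemma img_map: "g \<in> G \<Longrightarrow> set hs \<subseteq> hyps n G \<Longrightarrow> set (map (img g) hs) \<subseteq> hyps n G"
  using img_hyps[OF fprg] by auto

lemma cg_word:
  assumes "set pre \<subseteq> Gs" "set suf \<subseteq> Gs" "cg (mnm x) f"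
  shows "cg (mnm (pre @ x @ suf)) (fa_mult (fa_mult (mnm pre) f) (mnm suf))"
  using fcong_ctx[OF mono_FA[OF assms(1)] mono_FA[OF assms(2)] assms(3)]
  by (simp add: mono_mult)

lemma cg_word2:
  assumes "set pre \<subseteq> Gs" "set suf \<subseteq> Gs" "cg (mnm x) (mnm y)"
  shows "cg (mnm (pre @ x @ suf)) (mnm (pre @ y @ suf))"
  using cg_word[OF assms] by (simp add: mono_mult)

lemma mm2: "fa_mult (fa_gen a) (fa_gen b) = mnm [a, b]"
  by (simp add: fa_gen_mono mono_mult)

lemma rel_one: "cg (mnm [Tg (1\<^sub>m n)]) (mnm [])"
proof (rule fcong_rel)
  show "fa_sub (TT (1\<^sub>m n)) fa_one \<in> Rl"
    unfolding B_rels_def Un_iff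
    apply (rule disjI1, rule disjI1, rule disjI1, rule disjI1, rule disjI1, rule disjI1)
    apply (rule disjI1, rule disjI1, rule disjI1, rule disjI1, rule disjI1)
    by simp
qed (simp add: fa_gen_mono fa_one_mono)

lemma rel0: "g \<in> G \<Longrightarrow> h \<in> G \<Longrightarrow> cg (mnm [Tg g, Tg h]) (mnm [Tg (g * h)])"
proof (rule fcong_rel)
  assume a: "g \<in> G" "h \<in> G"
  show "fa_sub (fa_mult (TT g) (TT h)) (TT (g * h)) \<in> Rl"
    unfolding B_rels_def Un_iff
    apply (rule disjI1, rule disjI1, rule disjI1, rule disjI1, rule disjI1, rule disjI1)
    apply (rule disjI1, rule disjI1, rule disjI1, rule disjI1, rule disjI2)
    using a by blast
qed (simp add: fa_gen_mono mono_mult)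

lemma rel2: "H \<in> hyps n G \<Longrightarrow> cg (mnm [Eg H, Eg H]) (fa_smult (tau H) (mnm [Eg H]))"
proof (rule fcong_rel)
  assume a: "H \<in> hyps n G"
  show "fa_sub (fa_mult (EE H) (EE H)) (fa_smult (tau H) (EE H)) \<in> Rl"
    unfolding B_rels_def Un_iff
    apply (rule disjI1, rule disjI1, rule disjI1, rule disjI1, rule disjI1, rule disjI2)
    using a by blast
qed (simp add: fa_gen_mono mono_mult)

lemma rel3: "g \<in> G \<Longrightarrow> K \<in> hyps n G \<Longrightarrow> cg (mnm [Tg g, Eg K]) (mnm [Eg (img g K), Tg g])"
proof (rule fcong_rel)
  assume a: "g \<in> G" "K \<in> hyps n G"
  have b: "img g K \<in> hyps n G" using a by (rule img_hyps[OF fprg])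
  show "fa_sub (fa_mult (TT g) (EE K)) (fa_mult (EE (img g K)) (TT g)) \<in> Rl"
    unfolding B_rels_def Un_iff
    apply (rule disjI1, rule disjI1, rule disjI1, rule disjI1, rule disjI2)
    using a b by blast
qed (simp add: fa_gen_mono mono_mult)

lemma rel4: "H \<in> hyps n G \<Longrightarrow> K \<in> hyps n G \<Longrightarrow> transversal n G H K \<Longrightarrow>
    cg (mnm [Eg H, Eg K]) (mnm [Eg K, Eg H])"
proof (rule fcong_rel)
  assume a: "H \<in> hyps n G" "K \<in> hyps n G" "transversal n G H K"
  show "fa_sub (fa_mult (EE H) (EE K)) (fa_mult (EE K) (EE H)) \<in> Rl"
    unfolding B_rels_def Un_iff
    apply (rule disjI1, rule disjI1, rule disjI1, rule disjI2)
    using a by blast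
qed (simp add: fa_gen_mono mono_mult)

lemma rel5: "H \<in> hyps n G \<Longrightarrow> K \<in> hyps n G \<Longrightarrow> H \<noteq> K \<Longrightarrow> noncrossing_edge n G (H \<inter> K) \<Longrightarrow>
    R_between n G H K \<noteq> {} \<Longrightarrow>
    cg (mnm [Eg H, Eg K]) (fa_lincomb mu (\<lambda>s. mnm [Tg s, Eg K]) (R_between n G H K))"
proof (rule fcong_rel)
  assume a: "H \<in> hyps n G" "K \<in> hyps n G" "H \<noteq> K" "noncrossing_edge n G (H \<inter> K)" "R_between n G H K \<noteq> {}"
  show "fa_sub (fa_mult (EE H) (EE K)) (fa_mult (fa_lincomb mu TT (R_between n G H K)) (EE K)) \<in> Rl"
    unfolding B_rels_def Un_iff
    apply (rule disjI1, rule disjI1, rule disjI2)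
    using a by blast
qed (simp add: fa_gen_mono mono_mult fa_mult_lincomb_left)

lemma rel6: "H \<in> hyps n G \<Longrightarrow> K \<in> hyps n G \<Longrightarrow> H \<noteq> K \<Longrightarrow> noncrossing_edge n G (H \<inter> K) \<Longrightarrow>
    R_between n G H K = {} \<Longrightarrow> cg (mnm [Eg H, Eg K]) (\<lambda>w. 0)"
proof (rule fcong_rel)
  assume a: "H \<in> hyps n G" "K \<in> hyps n G" "H \<noteq> K" "noncrossing_edge n G (H \<inter> K)" "R_between n G H K = {}"
  show "fa_mult (EE H) (EE K) \<in> Rl"
    unfolding B_rels_def Un_iff
    apply (rule disjI2)
    using a by blast
qed (simp add: fa_gen_mono mono_mult fa_sub_zero)

lemma push:
  assumes g: "g \<in> G" and hs: "set hs \<subseteq> hyps n G" and suf: "set suf \<subseteq> Gs"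
  shows "set pre \<subseteq> Gs \<Longrightarrow> cg (mnm (pre @ Tg g # map Eg hs @ suf)) (mnm (pre @ map Eg (map (img g) hs) @ Tg g # suf))"
  using hs
proof (induction hs arbitrary: pre)
  case Nil
  then show ?case by (simp add: fcong_refl)
next
  case (Cons K hs)
  have K: "K \<in> hyps n G" and hs': "set hs \<subseteq> hyps n G" using Cons by auto
  have gK: "img g K \<in> hyps n G" using img_hyps[OF fprg g K] .
  have s1: "set (map Eg hs @ suf) \<subseteq> Gs" using Eg_set[OF hs'] suf by auto
  have st1: "cg (mnm (pre @ [Tg g, Eg K] @ (map Eg hs @ suf))) (mnm (pre @ [Eg (img g K), Tg g] @ (map Eg hs @ suf)))"
    by (rule cg_word2[OF Cons.prems(1) s1 rel3[OF g K]])
  have pps: "set (pre @ [Eg (img g K)]) \<subseteq> Gs" using Cons.prems(1) Eg_gen[OF gK] by auto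
  have st2: "cg (mnm ((pre @ [Eg (img g K)]) @ Tg g # map Eg hs @ suf))
      (mnm ((pre @ [Eg (img g K)]) @ map Eg (map (img g) hs) @ Tg g # suf))"
    by (rule Cons.IH[OF pps hs'])
  have e1: "pre @ [Tg g, Eg K] @ (map Eg hs @ suf) = pre @ Tg g # map Eg (K # hs) @ suf" by simp
  have e2: "pre @ [Eg (img g K), Tg g] @ (map Eg hs @ suf) = (pre @ [Eg (img g K)]) @ Tg g # map Eg hs @ suf" by simp
  have e3: "(pre @ [Eg (img g K)]) @ map Eg (map (img g) hs) @ Tg g # suf = pre @ map Eg (map (img g) (K # hs)) @ Tg g # suf" by simp
  show ?case using fcong_trans[OF st1[unfolded e1 e2] st2] unfolding e3 .
qed

lemma push_T:
  assumes g: "g \<in> G" and hs: "set hs \<subseteq> hyps n G" and w: "w \<in> G" and pre: "set pre \<subseteq> Gs"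
  shows "cg (mnm (pre @ Tg g # map Eg hs @ [Tg w])) (mnm (pre @ map Eg (map (img g) hs) @ [Tg (g * w)]))"
proof -
  have "cg (mnm (pre @ Tg g # map Eg hs @ [Tg w])) (mnm (pre @ map Eg (map (img g) hs) @ Tg g # [Tg w]))"
    using push[OF g hs _ pre] Tg_gen[OF w] by auto
  moreover have "cg (mnm ((pre @ map Eg (map (img g) hs)) @ [Tg g, Tg w] @ []))
      (mnm ((pre @ map Eg (map (img g) hs)) @ [Tg (g * w)] @ []))"
    by (rule cg_word2[OF _ _ rel0[OF g w]]) (use pre Eg_set[OF img_map[OF g hs]] in auto)
  ultimately show ?thesis by (auto elim: fcong_trans)
qed

lemma comm:
  assumes H: "H \<in> hyps n G" and B: "set B \<subseteq> hyps n G" and tr: "\<forall>X\<in>set B. transversal n G H X"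
    and suf: "set suf \<subseteq> Gs"
  shows "set pre \<subseteq> Gs \<Longrightarrow> cg (mnm (pre @ Eg H # map Eg B @ suf)) (mnm (pre @ map Eg B @ Eg H # suf))"
  using B tr
proof (induction B arbitrary: pre)
  case Nil
  then show ?case by (simp add: fcong_refl)
next
  case (Cons X B)
  have X: "X \<in> hyps n G" and B': "set B \<subseteq> hyps n G" and tX: "transversal n G H X"
    and tB: "\<forall>X\<in>set B. transversal n G H X" using Cons.prems by auto
  have pg: "set pre \<subseteq> Gs" using Cons.prems by blast
  have s1: "set (map Eg B @ suf) \<subseteq> Gs" using Eg_set[OF B'] suf by auto
  have st1: "cg (mnm (pre @ [Eg H, Eg X] @ (map Eg B @ suf))) (mnm (pre @ [Eg X, Eg H] @ (map Eg B @ suf)))"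
    by (rule cg_word2[OF pg s1 rel4[OF H X tX]])
  have pps: "set (pre @ [Eg X]) \<subseteq> Gs" using pg Eg_gen[OF X] by auto
  have st2: "cg (mnm ((pre @ [Eg X]) @ Eg H # map Eg B @ suf)) (mnm ((pre @ [Eg X]) @ map Eg B @ Eg H # suf))"
    by (rule Cons.IH[OF pps B' tB])
  have e1: "pre @ [Eg H, Eg X] @ (map Eg B @ suf) = pre @ Eg H # map Eg (X # B) @ suf" by simp
  have e2: "pre @ [Eg X, Eg H] @ (map Eg B @ suf) = (pre @ [Eg X]) @ Eg H # map Eg B @ suf" by simp
  have e3: "(pre @ [Eg X]) @ map Eg B @ Eg H # suf = pre @ map Eg (X # B) @ Eg H # suf" by simp
  show ?case using fcong_trans[OF st1[unfolded e1 e2] st2] unfolding e3 .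
qed

lemma pattern:
  assumes hs: "set hs \<subseteq> hyps n G" and len: "card (hyps n G) < length hs"
  shows "\<exists>A H B K C. hs = A @ H # B @ K # C \<and> (\<forall>X\<in>set B. X \<noteq> H \<and> transversal n G H X)
            \<and> (H = K \<or> \<not> transversal n G H K)"
proof -
  have "\<not> distinct hs"
  proof
    assume "distinct hs"
    hence "length hs = card (set hs)" by (simp add: distinct_card)
    also have "\<dots> \<le> card (hyps n G)" using hs hyps_finite[OF fprg] by (rule card_mono[rotated])
    finally show False using len by simp
  qed
  then obtain xs y ys zs where hsd: "hs = xs @ [y] @ ys @ [y] @ zs" using not_distinct_decomp by blast
  show ?thesis
  proof (cases "\<exists>X\<in>set ys. X = y \<or> \<not> transversal n G y X")
    case True
    then obtain B X D where yB: "ys = B @ X # D" and P1: "X = y \<or> \<not> transversal n G y X"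
      and P2: "\<forall>Z\<in>set B. \<not> (Z = y \<or> \<not> transversal n G y Z)"
      using split_list_first_prop[of ys "\<lambda>X. X = y \<or> \<not> transversal n G y X"] by blast
    have e: "hs = xs @ y # B @ X # (D @ y # zs)" using hsd yB by simp
    have P2': "\<forall>Z\<in>set B. Z \<noteq> y \<and> transversal n G y Z" using P2 by blast
    show ?thesis
      apply (rule exI[of _ xs], rule exI[of _ y], rule exI[of _ B], rule exI[of _ X], rule exI[of _ "D @ y # zs"])
      using e P1 P2' by blast
  next
    case False
    hence P2': "\<forall>Z\<in>set ys. Z \<noteq> y \<and> transversal n G y Z" by blast
    have e: "hs = xs @ y # ys @ y # zs" using hsd by simp
    show ?thesis
      apply (rule exI[of _ xs], rule exI[of _ y], rule exI[of _ ys], rule exI[of _ y], rule exI[of _ zs])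
      using e P2' by blast
  qed
qed

lemma NF_mem: "set hs \<subseteq> hyps n G \<Longrightarrow> length hs \<le> k \<Longrightarrow> w \<in> G \<Longrightarrow> mnm (map Eg hs @ [Tg w]) \<in> NF n G k"
  unfolding NF_def by blast

lemma reduce:
  assumes hs: "set (A @ H # B @ K # C) \<subseteq> hyps n G"
    and Bt: "\<forall>X\<in>set B. X \<noteq> H \<and> transversal n G H X"
    and bad: "H = K \<or> \<not> transversal n G H K" and w: "w \<in> G"
  shows "SP Gs Rl (NF n G (length A + length B + length C + 1)) (mnm (map Eg (A @ H # B @ K # C) @ [Tg w]))"
proof -
  let ?k = "length A + length B + length C + 1"
  have A: "set A \<subseteq> hyps n G" and H: "H \<in> hyps n G" and B: "set B \<subseteq> hyps n G"
    and K: "K \<in> hyps n G" and C: "set C \<subseteq> hyps n G" using hs by auto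
  define E where "E = A @ B"
  have E: "set E \<subseteq> hyps n G" unfolding E_def using A B by auto
  define pre :: "bgen list" where "pre = map Eg E"
  define suf :: "bgen list" where "suf = map Eg C @ [Tg w]"
  have pre: "set pre \<subseteq> Gs" unfolding pre_def using Eg_set[OF E] .
  have suf: "set suf \<subseteq> Gs" unfolding suf_def using Eg_set[OF C] Tg_gen[OF w] by auto
  have "cg (mnm (map Eg A @ Eg H # map Eg B @ (Eg K # map Eg C @ [Tg w])))
          (mnm (map Eg A @ map Eg B @ Eg H # (Eg K # map Eg C @ [Tg w])))"
    by (rule comm[OF H B]) (use Bt Eg_set[OF A] Eg_set[OF C] Eg_gen[OF K] Tg_gen[OF w] in auto)
  hence c1: "cg (mnm (map Eg (A @ H # B @ K # C) @ [Tg w])) (mnm (pre @ [Eg H, Eg K] @ suf))"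
    unfolding pre_def suf_def E_def by simp
  have "SP Gs Rl (NF n G ?k) (mnm (pre @ [Eg H, Eg K] @ suf))"
  proof (cases "H = K")
    case True
    have c2: "cg (mnm (pre @ [Eg H, Eg H] @ suf))
        (fa_mult (fa_mult (mnm pre) (fa_smult (tau H) (mnm [Eg H]))) (mnm suf))"
      by (rule cg_word[OF pre suf rel2[OF H]])
    have eq: "fa_mult (fa_mult (mnm pre) (fa_smult (tau H) (mnm [Eg H]))) (mnm suf)
        = fa_smult (tau H) (mnm (map Eg (E @ H # C) @ [Tg w]))"
      unfolding pre_def suf_def by (simp add: fa_mult_smult_right fa_mult_smult_left mono_mult)
    have s1: "set (E @ H # C) \<subseteq> hyps n G" using E H C by simp
    have l1: "length (E @ H # C) \<le> ?k" unfolding E_def by simp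
    have "SP Gs Rl (NF n G ?k) (mnm (map Eg (E @ H # C) @ [Tg w]))"
      by (rule SP_mem[OF NF_mem[OF s1 l1 w]])
    hence "SP Gs Rl (NF n G ?k) (fa_smult (tau H) (mnm (map Eg (E @ H # C) @ [Tg w])))"
      by (rule SP_smult)
    hence "SP Gs Rl (NF n G ?k) (mnm (pre @ [Eg H, Eg H] @ suf))"
      using SP_cong[OF c2] unfolding eq by blast
    thus ?thesis using True by simp
  next
    case False
    hence nt: "\<not> transversal n G H K" using bad by simp
    have nc: "noncrossing_edge n G (H \<inter> K)" by (rule dichotomy[OF fprg H K False nt])
    show ?thesis
    proof (cases "R_between n G H K = {}")
      case True
      have "cg (mnm (pre @ [Eg H, Eg K] @ suf)) (fa_mult (fa_mult (mnm pre) (\<lambda>w. 0)) (mnm suf))"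
        by (rule cg_word[OF pre suf rel6[OF H K False nc True]])
      thus ?thesis by (simp add: SP_cong SP_zero)
    next
      case Rne: False
      let ?R = "R_between n G H K"
      have RG: "?R \<subseteq> G" unfolding R_between_def refls_def by auto
      have finR: "finite ?R" using RG G_finite[OF fprg] finite_subset by blast
      have cgR: "cg (mnm (pre @ [Eg H, Eg K] @ suf))
          (fa_mult (fa_mult (mnm pre) (fa_lincomb mu (\<lambda>s. mnm [Tg s, Eg K]) ?R)) (mnm suf))"
        by (rule cg_word[OF pre suf rel5[OF H K False nc Rne]])
      have eqR: "fa_mult (fa_mult (mnm pre) (fa_lincomb mu (\<lambda>s. mnm [Tg s, Eg K]) ?R)) (mnm suf)
          = fa_lincomb mu (\<lambda>s. mnm (map Eg E @ Tg s # map Eg (K # C) @ [Tg w])) ?R"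
        unfolding pre_def suf_def by (simp add: fa_mult_lincomb_right fa_mult_lincomb_left mono_mult)
      have spR: "SP Gs Rl (NF n G ?k) (fa_lincomb mu (\<lambda>s. mnm (map Eg E @ Tg s # map Eg (K # C) @ [Tg w])) ?R)"
      proof (rule SP_lincomb[OF finR])
        fix s assume s: "s \<in> ?R"
        hence sG: "s \<in> G" using RG by auto
        have KC: "set (K # C) \<subseteq> hyps n G" using K C by auto
        have p1: "cg (mnm (map Eg E @ Tg s # map Eg (K # C) @ [Tg w]))
            (mnm (map Eg E @ map Eg (map (img s) (K # C)) @ [Tg (s * w)]))"
          by (rule push_T[OF sG KC w Eg_set[OF E]])
        have p2: "mnm (map Eg E @ map Eg (map (img s) (K # C)) @ [Tg (s * w)])
            = mnm (map Eg (E @ map (img s) (K # C)) @ [Tg (s * w)])" by simp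
        have p3: "mnm (map Eg (E @ map (img s) (K # C)) @ [Tg (s * w)]) \<in> NF n G ?k"
        proof (rule NF_mem)
          show "set (E @ map (img s) (K # C)) \<subseteq> hyps n G" using E img_map[OF sG KC] by simp
          show "length (E @ map (img s) (K # C)) \<le> ?k" unfolding E_def by simp
          show "s * w \<in> G" using G_mult[OF fprg sG w] .
        qed
        show "SP Gs Rl (NF n G ?k) (mnm (map Eg E @ Tg s # map Eg (K # C) @ [Tg w]))"
          using SP_cong[OF p1[unfolded p2] SP_mem[OF p3]] .
      qed
      show ?thesis using SP_cong[OF cgR[unfolded eqR] spR] .
    qed
  qed
  thus ?thesis using SP_cong[OF c1] by blast
qed

lemma NF_all:
  "set hs \<subseteq> hyps n G \<Longrightarrow> w \<in> G \<Longrightarrow> SP Gs Rl (NF n G (card (hyps n G))) (mnm (map Eg hs @ [Tg w]))"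
proof (induction "length hs" arbitrary: hs w rule: less_induct)
  case less
  show ?case
  proof (cases "length hs \<le> card (hyps n G)")
    case True
    show ?thesis by (rule SP_mem[OF NF_mem[OF less.prems(1) True less.prems(2)]])
  next
    case False
    then obtain A H B K C where hsd: "hs = A @ H # B @ K # C"
      and Bt: "\<forall>X\<in>set B. X \<noteq> H \<and> transversal n G H X" and bad: "H = K \<or> \<not> transversal n G H K"
      using pattern[OF less.prems(1)] by fastforce
    have red: "SP Gs Rl (NF n G (length A + length B + length C + 1)) (mnm (map Eg hs @ [Tg w]))"
      unfolding hsd by (rule reduce[OF less.prems(1)[unfolded hsd] Bt bad less.prems(2)])
    show ?thesis
    proof (rule SP_trans[OF red])
      fix x assume "x \<in> NF n G (length A + length B + length C + 1)"
      then obtain hs' w' where x: "x = mnm (map Eg hs' @ [Tg w'])" and h1: "set hs' \<subseteq> hyps n G"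
        and h2: "length hs' \<le> length A + length B + length C + 1" and h3: "w' \<in> G"
        unfolding NF_def by blast
      have "length hs' < length hs" using h2 hsd by simp
      thus "SP Gs Rl (NF n G (card (hyps n G))) x" unfolding x using less.hyps h1 h3 by blast
    qed
  qed
qed

lemma NFall_mem: "set hs \<subseteq> hyps n G \<Longrightarrow> w \<in> G \<Longrightarrow> mnm (map Eg hs @ [Tg w]) \<in> NFall n G"
  unfolding NFall_def by blast

lemma SP_word: "set u \<subseteq> Gs \<Longrightarrow> SP Gs Rl (NFall n G) (mnm u)"
proof (induction u)
  case Nil
  have c: "cg (mnm []) (mnm (map Eg [] @ [Tg (1\<^sub>m n)]))" using fcong_sym[OF rel_one] by simp
  have m: "mnm (map Eg [] @ [Tg (1\<^sub>m n)]) \<in> NFall n G" by (rule NFall_mem) (auto simp: G_one[OF fprg])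
  show ?case by (rule SP_cong[OF c SP_mem[OF m]])
next
  case (Cons x u)
  have xG: "x \<in> Gs" and uG: "set u \<subseteq> Gs" using Cons.prems by auto
  obtain g where g: "g \<in> spn (NFall n G)" and cgu: "cg (mnm u) g"
    using Cons.IH[OF uG] unfolding SP_def by blast
  have c1: "cg (fa_mult (mnm [x]) (mnm u)) (fa_mult (mnm [x]) g)"
    by (rule fcong_lmult[OF mono_FA cgu]) (use xG in simp)
  have e1: "fa_mult (mnm [x]) (mnm u) = mnm (x # u)" by (simp add: mono_mult)
  have "SP Gs Rl (NFall n G) (fa_mult (mnm [x]) g)"
  proof (rule spn_mult[OF g])
    fix y assume "y \<in> NFall n G"
    then obtain hs w where y: "y = mnm (map Eg hs @ [Tg w])" and hs: "set hs \<subseteq> hyps n G" and w: "w \<in> G"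
      unfolding NFall_def by blast
    have ey: "fa_mult (mnm [x]) y = mnm (x # map Eg hs @ [Tg w])" unfolding y by (simp add: mono_mult)
    from xG consider (T) g' where "x = Tg g'" "g' \<in> G" | (E) H where "x = Eg H" "H \<in> hyps n G"
      unfolding B_gens_def by blast
    thus "SP Gs Rl (NFall n G) (fa_mult (mnm [x]) y)"
    proof cases
      case T
      have p0: "cg (mnm ([] @ Tg g' # map Eg hs @ [Tg w])) (mnm ([] @ map Eg (map (img g') hs) @ [Tg (g' * w)]))"
        by (rule push_T[OF T(2) hs w]) simp
      hence p: "cg (mnm (Tg g' # map Eg hs @ [Tg w])) (mnm (map Eg (map (img g') hs) @ [Tg (g' * w)]))"
        by simp
      have m: "mnm (map Eg (map (img g') hs) @ [Tg (g' * w)]) \<in> NFall n G"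
        by (rule NFall_mem[OF img_map[OF T(2) hs] G_mult[OF fprg T(2) w]])
      show ?thesis using SP_cong[OF p SP_mem[OF m]] ey T(1) by simp
    next
      case E
      have m: "mnm (map Eg (H # hs) @ [Tg w]) \<in> NFall n G"
        by (rule NFall_mem) (use E hs w in auto)
      show ?thesis using SP_mem[OF m] ey E(1) by simp
    qed
  qed
  thus ?case using SP_cong[OF c1] unfolding e1 by blast
qed

lemma spanning: "f \<in> FA Gs \<Longrightarrow> SP Gs Rl (NF n G (card (hyps n G))) f"
proof -
  assume f: "f \<in> FA Gs"
  have fin: "finite {w. f w \<noteq> 0}" using f unfolding FA_def by auto
  have "SP Gs Rl (NF n G (card (hyps n G))) (fa_lincomb f mnm {w. f w \<noteq> 0})"
  proof (rule SP_lincomb[OF fin])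
    fix u assume "u \<in> {w. f w \<noteq> 0}"
    hence u: "set u \<subseteq> Gs" using f unfolding FA_def by auto
    show "SP Gs Rl (NF n G (card (hyps n G))) (mnm u)"
    proof (rule SP_trans[OF SP_word[OF u]])
      fix x assume "x \<in> NFall n G"
      then obtain hs w where x: "x = mnm (map Eg hs @ [Tg w])" and hs: "set hs \<subseteq> hyps n G" and w: "w \<in> G"
        unfolding NFall_def by blast
      show "SP Gs Rl (NF n G (card (hyps n G))) x" unfolding x by (rule NF_all[OF hs w])
    qed
  qed
  thus ?thesis using FA_expand[OF f] by simp
qed

lemma NF_finite: "finite (NF n G k)"
proof -
  have "NF n G k \<subseteq> (\<lambda>(hs, w). mnm (map Eg hs @ [Tg w])) ` ({hs. set hs \<subseteq> hyps n G \<and> length hs \<le> k} \<times> G)"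
    unfolding NF_def by auto
  moreover have "finite ({hs. set hs \<subseteq> hyps n G \<and> length hs \<le> k} \<times> G)"
    using finite_lists_length_le[OF hyps_finite[OF fprg]] G_finite[OF fprg] by blast
  ultimately show ?thesis using finite_subset by blast
qed

lemma NF_FA: "NF n G k \<subseteq> FA Gs"
  unfolding NF_def using Eg_gen Tg_gen by (force intro!: mono_FA)

end


fun evf :: "bgen list \<Rightarrow> complex mat \<Rightarrow> complex mat option" where
  "evf [] q = Some q"
| "evf (Tg g # u) q = map_option (\<lambda>p. g * p) (evf u q)"
| "evf (Eg H # u) q = None"

lemma evf_append: "evf (u @ v) q = Option.bind (evf v q) (evf u)"
proof (induction u)
  case Nil
  then show ?case by (cases "evf v q") auto
next
  case (Cons a u)
  then show ?case by (cases a; cases "evf v q") auto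
qed

lemma evf_Eg: "Eg H \<in> set u \<Longrightarrow> evf u q = None"
proof (induction u)
  case (Cons a u)
  then show ?case by (cases a) auto
qed simp

lemma evf_carrier: "set u \<subseteq> Tg ` G \<union> Eg ` Hs \<Longrightarrow> G \<subseteq> carrier_mat n n \<Longrightarrow> q \<in> carrier_mat n n \<Longrightarrow>
    evf u q = Some q' \<Longrightarrow> q' \<in> carrier_mat n n"
proof (induction u arbitrary: q')
  case (Cons a u)
  then show ?case by (cases a) auto
qed simp

definition fs :: "('g list \<Rightarrow> complex) \<Rightarrow> bool" where
  "fs f \<longleftrightarrow> finite {w. f w \<noteq> 0}"

definition hasE :: "(bgen list \<Rightarrow> complex) \<Rightarrow> bool" where
  "hasE f \<longleftrightarrow> (\<forall>u. f u \<noteq> 0 \<longrightarrow> (\<exists>H. Eg H \<in> set u))"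

lemma fa_mult_nz: "fa_mult f g w \<noteq> 0 \<Longrightarrow> \<exists>k\<le>length w. f (take k w) \<noteq> 0 \<and> g (drop k w) \<noteq> 0"
proof (rule ccontr)
  assume "fa_mult f g w \<noteq> 0" "\<not> (\<exists>k\<le>length w. f (take k w) \<noteq> 0 \<and> g (drop k w) \<noteq> 0)"
  hence "\<forall>k\<in>{..length w}. f (take k w) * g (drop k w) = 0" by auto
  hence "fa_mult f g w = 0" unfolding fa_mult_def by (simp add: sum.neutral)
  thus False using \<open>fa_mult f g w \<noteq> 0\<close> by simp
qed

lemma supp_mult: "{w. fa_mult f g w \<noteq> 0} \<subseteq> (\<lambda>(u, v). u @ v) ` ({w. f w \<noteq> 0} \<times> {w. g w \<noteq> 0})"
proof
  fix w assume "w \<in> {w. fa_mult f g w \<noteq> 0}"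
  then obtain k where "f (take k w) \<noteq> 0" "g (drop k w) \<noteq> 0" using fa_mult_nz by blast
  thus "w \<in> (\<lambda>(u, v). u @ v) ` ({w. f w \<noteq> 0} \<times> {w. g w \<noteq> 0})"
    by (intro image_eqI[of _ _ "(take k w, drop k w)"]) auto
qed

lemma fs_mult: "fs f \<Longrightarrow> fs g \<Longrightarrow> fs (fa_mult f g)"
  unfolding fs_def using supp_mult finite_subset by blast

lemma fs_sub: "fs f \<Longrightarrow> fs g \<Longrightarrow> fs (fa_sub f g)"
  unfolding fs_def fa_sub_def by (rule finite_subset[of _ "{w. f w \<noteq> 0} \<union> {w. g w \<noteq> 0}"]) auto

lemma fs_add: "fs f \<Longrightarrow> fs g \<Longrightarrow> fs (fa_add f g)"
  unfolding fs_def fa_add_def by (rule finite_subset[of _ "{w. f w \<noteq> 0} \<union> {w. g w \<noteq> 0}"]) auto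

lemma fs_smult: "fs f \<Longrightarrow> fs (fa_smult c f)"
  unfolding fs_def fa_smult_def by (rule finite_subset[of _ "{w. f w \<noteq> 0}"]) auto

lemma fs_mnm: "fs (mnm u)"
  unfolding fs_def mnm_def by (rule finite_subset[of _ "{u}"]) auto

lemma fs_zero: "fs (\<lambda>w. 0)"
  unfolding fs_def by simp

lemma fs_lincomb: "finite R \<Longrightarrow> (\<And>s. s \<in> R \<Longrightarrow> fs (b s)) \<Longrightarrow> fs (fa_lincomb c b R)"
proof (induction R rule: finite_induct)
  case empty
  then show ?case by (simp add: fa_lincomb_empty fs_zero)
next
  case (insert x F)
  then show ?case by (simp add: fa_lincomb_insert fs_add fs_smult)
qed

lemma hasE_gen: "hasE (fa_gen (Eg H))"
  unfolding hasE_def fa_gen_def by auto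

lemma hasE_mult_right: "hasE g \<Longrightarrow> hasE (fa_mult f g)"
  unfolding hasE_def
proof (intro allI impI)
  fix u assume g: "\<forall>u. g u \<noteq> 0 \<longrightarrow> (\<exists>H. Eg H \<in> set u)" and "fa_mult f g u \<noteq> 0"
  then obtain k where "g (drop k u) \<noteq> 0" using fa_mult_nz by blast
  then obtain H where "Eg H \<in> set (drop k u)" using g by blast
  thus "\<exists>H. Eg H \<in> set u" using in_set_dropD by fast
qed

lemma hasE_mult_left: "hasE f \<Longrightarrow> hasE (fa_mult f g)"
  unfolding hasE_def
proof (intro allI impI)
  fix u assume f: "\<forall>u. f u \<noteq> 0 \<longrightarrow> (\<exists>H. Eg H \<in> set u)" and "fa_mult f g u \<noteq> 0"
  then obtain k where "f (take k u) \<noteq> 0" using fa_mult_nz by blast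
  then obtain H where "Eg H \<in> set (take k u)" using f by blast
  thus "\<exists>H. Eg H \<in> set u" using in_set_takeD by fast
qed

lemma hasE_sub: "hasE f \<Longrightarrow> hasE g \<Longrightarrow> hasE (fa_sub f g)"
  unfolding hasE_def fa_sub_def by (metis diff_zero eq_iff_diff_eq_0)

lemma hasE_smult: "hasE f \<Longrightarrow> hasE (fa_smult c f)"
  unfolding hasE_def fa_smult_def by auto

definition Phi :: "(bgen list \<Rightarrow> complex) \<Rightarrow> complex mat \<Rightarrow> complex mat \<Rightarrow> complex" where
  "Phi x q m = (\<Sum>u\<in>{w. x w \<noteq> 0}. x u * (if evf u q = Some m then 1 else 0))"

lemma Phi_superset:
  assumes "finite S" "{w. x w \<noteq> 0} \<subseteq> S"
  shows "Phi x q m = (\<Sum>u\<in>S. x u * (if evf u q = Some m then 1 else 0))"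
  unfolding Phi_def by (rule sum.mono_neutral_left) (use assms in auto)

lemma Phi_hasE: "hasE x \<Longrightarrow> Phi x q m = 0"
  unfolding Phi_def hasE_def by (auto intro!: sum.neutral simp: evf_Eg)

lemma Phi_add: "fs f \<Longrightarrow> fs g \<Longrightarrow> Phi (fa_add f g) q m = Phi f q m + Phi g q m"
proof -
  assume f: "fs f" and g: "fs g"
  let ?S = "{w. f w \<noteq> 0} \<union> {w. g w \<noteq> 0}"
  have fin: "finite ?S" using f g unfolding fs_def by simp
  have s1: "{w. f w \<noteq> 0} \<subseteq> ?S" and s2: "{w. g w \<noteq> 0} \<subseteq> ?S"
    and s3: "{w. fa_add f g w \<noteq> 0} \<subseteq> ?S" by (auto simp: fa_add_def)
  show ?thesis
    unfolding Phi_superset[OF fin s1] Phi_superset[OF fin s2] Phi_superset[OF fin s3]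
    by (auto simp: fa_add_def sum.distrib algebra_simps)
qed

lemma Phi_sub: "fs f \<Longrightarrow> fs g \<Longrightarrow> Phi (fa_sub f g) q m = Phi f q m - Phi g q m"
proof -
  assume f: "fs f" and g: "fs g"
  let ?S = "{w. f w \<noteq> 0} \<union> {w. g w \<noteq> 0}"
  have fin: "finite ?S" using f g unfolding fs_def by simp
  have s1: "{w. f w \<noteq> 0} \<subseteq> ?S" and s2: "{w. g w \<noteq> 0} \<subseteq> ?S"
    and s3: "{w. fa_sub f g w \<noteq> 0} \<subseteq> ?S" by (auto simp: fa_sub_def)
  show ?thesis
    unfolding Phi_superset[OF fin s1] Phi_superset[OF fin s2] Phi_superset[OF fin s3]
    by (auto simp: fa_sub_def sum_subtractf algebra_simps)
qed

lemma Phi_smult: "fs f \<Longrightarrow> Phi (fa_smult c f) q m = c * Phi f q m"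
proof -
  assume f: "fs f"
  let ?S = "{w. f w \<noteq> 0}"
  have fin: "finite ?S" using f unfolding fs_def by simp
  have s1: "{w. f w \<noteq> 0} \<subseteq> ?S" and s3: "{w. fa_smult c f w \<noteq> 0} \<subseteq> ?S" by (auto simp: fa_smult_def)
  show ?thesis
    unfolding Phi_superset[OF fin s1] Phi_superset[OF fin s3]
    by (auto simp: fa_smult_def sum_distrib_left algebra_simps)
qed

lemma Phi_mnm: "Phi (mnm u) q m = (if evf u q = Some m then 1 else 0)"
proof -
  have su: "{w. mnm u w \<noteq> 0} \<subseteq> {u}" by (auto simp: mnm_def)
  show ?thesis unfolding Phi_superset[OF finite.insertI[OF finite.emptyI] su] by (auto simp: mnm_def)
qed

lemma Phi_zero: "Phi (\<lambda>w. 0) q m = 0"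
  unfolding Phi_def by simp

lemma Phi_lincomb: "finite R \<Longrightarrow> (\<And>s. s \<in> R \<Longrightarrow> fs (b s)) \<Longrightarrow>
    Phi (fa_lincomb c b R) q m = (\<Sum>s\<in>R. c s * Phi (b s) q m)"
proof (induction R rule: finite_induct)
  case empty
  then show ?case by (simp add: fa_lincomb_empty Phi_zero)
next
  case (insert x F)
  then show ?case
    by (simp add: fa_lincomb_insert Phi_add Phi_smult fs_smult fs_lincomb)
qed

lemma sum_mult_split:
  fixes f g :: "bgen list \<Rightarrow> complex"
  assumes "fs f" "fs g"
  shows "(\<Sum>w\<in>(\<lambda>(u, v). u @ v) ` ({w. f w \<noteq> 0} \<times> {w. g w \<noteq> 0}). fa_mult f g w * F w)
       = (\<Sum>(u, v)\<in>{w. f w \<noteq> 0} \<times> {w. g w \<noteq> 0}. f u * g v * F (u @ v))"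
proof -
  let ?Sf = "{w. f w \<noteq> 0}" and ?Sg = "{w. g w \<noteq> 0}"
  let ?W = "(\<lambda>(u, v). u @ v) ` (?Sf \<times> ?Sg)"
  have finW: "finite ?W" using assms unfolding fs_def by simp
  let ?P = "Sigma ?W (\<lambda>w. {..length w})"
  let ?h = "\<lambda>(u::bgen list, v::bgen list). (u @ v, length u)"
  let ?t = "\<lambda>(w, k). f (take k w) * g (drop k w) * F w"
  have "(\<Sum>w\<in>?W. fa_mult f g w * F w) = (\<Sum>w\<in>?W. \<Sum>k\<le>length w. f (take k w) * g (drop k w) * F w)"
    unfolding fa_mult_def by (simp add: sum_distrib_right)
  also have "\<dots> = (\<Sum>p\<in>?P. ?t p)"
    by (rule sum.Sigma) (use finW in auto)
  also have "\<dots> = (\<Sum>p\<in>?h ` (?Sf \<times> ?Sg). ?t p)"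
  proof (rule sum.mono_neutral_right)
    show "finite ?P" using finW by auto
    show "?h ` (?Sf \<times> ?Sg) \<subseteq> ?P" by force
    show "\<forall>p\<in>?P - ?h ` (?Sf \<times> ?Sg). ?t p = 0"
    proof
      fix p assume p: "p \<in> ?P - ?h ` (?Sf \<times> ?Sg)"
      obtain w k where pw: "p = (w, k)" by force
      have k: "k \<le> length w" using p pw by auto
      show "?t p = 0"
      proof (rule ccontr)
        assume "?t p \<noteq> 0"
        hence "f (take k w) \<noteq> 0" "g (drop k w) \<noteq> 0" using pw by auto
        hence mem: "(take k w, drop k w) \<in> ?Sf \<times> ?Sg" by simp
        have eq: "?h (take k w, drop k w) = p" using pw k by simp
        have "p \<in> ?h ` (?Sf \<times> ?Sg)" unfolding eq[symmetric] by (rule imageI[OF mem])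
        thus False using p by blast
      qed
    qed
  qed
  also have "\<dots> = (\<Sum>(u, v)\<in>?Sf \<times> ?Sg. f u * g v * F (u @ v))"
    by (rule sum.reindex_cong[where l="?h"]) (auto simp: inj_on_def)
  finally show ?thesis .
qed

lemma Phi_mult:
  assumes "fs f" "fs g"
  shows "Phi (fa_mult f g) q m = (\<Sum>(u, v)\<in>{w. f w \<noteq> 0} \<times> {w. g w \<noteq> 0}.
            f u * g v * (if evf (u @ v) q = Some m then 1 else 0))"
proof -
  have finW: "finite ((\<lambda>(u, v). u @ v) ` ({w. f w \<noteq> 0} \<times> {w. g w \<noteq> 0}))"
    using assms unfolding fs_def by simp
  show ?thesis
    unfolding Phi_superset[OF finW supp_mult] sum_mult_split[OF assms] ..
qed


lemma Phi_lmult: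
  assumes a: "fs a" and x: "fs x" and z: "\<And>m. Phi x q m = 0"
  shows "Phi (fa_mult a x) q m = 0"
proof -
  let ?Sa = "{w. a w \<noteq> 0}" and ?Sx = "{w. x w \<noteq> 0}"
  let ?Q = "(\<lambda>v. the (evf v q)) ` ?Sx"
  have finQ: "finite ?Q" using x unfolding fs_def by simp
  let ?I = "\<lambda>b. if b then (1::complex) else 0"
  have key: "?I (Option.bind (evf v q) (evf u) = Some m) = (\<Sum>q'\<in>?Q. ?I (evf v q = Some q') * ?I (evf u q' = Some m))"
    if v: "v \<in> ?Sx" for u v
  proof (cases "evf v q")
    case None
    then show ?thesis by simp
  next
    case (Some q0)
    have q0: "q0 \<in> ?Q" using v Some by force
    have "(\<Sum>q'\<in>?Q. ?I (evf v q = Some q') * ?I (evf u q' = Some m))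
        = (\<Sum>q'\<in>?Q. if q' = q0 then ?I (evf u q0 = Some m) else 0)"
      by (rule sum.cong) (auto simp: Some)
    also have "\<dots> = ?I (evf u q0 = Some m)" using finQ q0 by simp
    finally show ?thesis using Some by simp
  qed
  have inner: "(\<Sum>v\<in>?Sx. x v * ?I (evf (u @ v) q = Some m)) = 0" for u
  proof -
    have "(\<Sum>v\<in>?Sx. x v * ?I (evf (u @ v) q = Some m))
        = (\<Sum>v\<in>?Sx. \<Sum>q'\<in>?Q. x v * ?I (evf v q = Some q') * ?I (evf u q' = Some m))"
      unfolding evf_append by (rule sum.cong[OF refl]) (simp add: key sum_distrib_left mult.assoc)
    also have "\<dots> = (\<Sum>q'\<in>?Q. \<Sum>v\<in>?Sx. x v * ?I (evf v q = Some q') * ?I (evf u q' = Some m))"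
      by (rule sum.swap)
    also have "\<dots> = (\<Sum>q'\<in>?Q. Phi x q q' * ?I (evf u q' = Some m))"
      unfolding Phi_def by (simp add: sum_distrib_right)
    also have "\<dots> = 0" using z by simp
    finally show ?thesis .
  qed
  have "Phi (fa_mult a x) q m = (\<Sum>(u, v)\<in>?Sa \<times> ?Sx. a u * x v * ?I (evf (u @ v) q = Some m))"
    by (rule Phi_mult[OF a x])
  also have "\<dots> = (\<Sum>u\<in>?Sa. \<Sum>v\<in>?Sx. a u * x v * ?I (evf (u @ v) q = Some m))"
    by (rule sum.cartesian_product[symmetric])
  also have "\<dots> = (\<Sum>u\<in>?Sa. a u * (\<Sum>v\<in>?Sx. x v * ?I (evf (u @ v) q = Some m)))"
    by (simp add: sum_distrib_left mult.assoc)
  also have "\<dots> = 0" using inner by simp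
  finally show ?thesis .
qed

lemma Phi_rmult:
  assumes a: "fs a" and x: "fs x"
    and z: "\<And>v q' m. a v \<noteq> 0 \<Longrightarrow> evf v q = Some q' \<Longrightarrow> Phi x q' m = 0"
  shows "Phi (fa_mult x a) q m = 0"
proof -
  let ?Sa = "{w. a w \<noteq> 0}" and ?Sx = "{w. x w \<noteq> 0}"
  let ?I = "\<lambda>b. if b then (1::complex) else 0"
  have inner: "(\<Sum>u\<in>?Sx. x u * ?I (evf (u @ v) q = Some m)) = 0" if v: "v \<in> ?Sa" for v
  proof (cases "evf v q")
    case None
    then show ?thesis by (simp add: evf_append)
  next
    case (Some q')
    have "(\<Sum>u\<in>?Sx. x u * ?I (evf (u @ v) q = Some m)) = Phi x q' m"
      unfolding Phi_def evf_append Some by simp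
    also have "\<dots> = 0" using z v Some by simp
    finally show ?thesis .
  qed
  have "Phi (fa_mult x a) q m = (\<Sum>(u, v)\<in>?Sx \<times> ?Sa. x u * a v * ?I (evf (u @ v) q = Some m))"
    by (rule Phi_mult[OF x a])
  also have "\<dots> = (\<Sum>u\<in>?Sx. \<Sum>v\<in>?Sa. x u * a v * ?I (evf (u @ v) q = Some m))"
    by (rule sum.cartesian_product[symmetric])
  also have "\<dots> = (\<Sum>v\<in>?Sa. \<Sum>u\<in>?Sx. x u * a v * ?I (evf (u @ v) q = Some m))"
    by (rule sum.swap)
  also have "\<dots> = (\<Sum>v\<in>?Sa. a v * (\<Sum>u\<in>?Sx. x u * ?I (evf (u @ v) q = Some m)))"
    by (simp add: sum_distrib_left ac_simps)
  also have "\<dots> = 0" using inner by simp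
  finally show ?thesis .
qed

definition good :: "nat \<Rightarrow> (bgen list \<Rightarrow> complex) \<Rightarrow> bool" where
  "good n x \<longleftrightarrow> fs x \<and> (\<forall>q\<in>carrier_mat n n. \<forall>m. Phi x q m = 0)"

lemma good_E: "fs x \<Longrightarrow> hasE x \<Longrightarrow> good n x"
  unfolding good_def using Phi_hasE by blast

lemma fs_gen: "fs (fa_gen a)"
  unfolding fa_gen_mono by (rule fs_mnm)

lemma S1: "good n (fa_sub (TT (1\<^sub>m n)) fa_one)"
  unfolding good_def
  by (auto simp: fs_sub fs_gen fa_one_mono fs_mnm Phi_sub Phi_mnm fa_gen_mono)

lemma S2: "w1 \<in> carrier_mat n n \<Longrightarrow> w2 \<in> carrier_mat n n \<Longrightarrow>
    good n (fa_sub (fa_mult (TT w1) (TT w2)) (TT (w1 * w2)))"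
  unfolding good_def
  by (auto simp: fs_sub fs_gen fs_mnm Phi_sub Phi_mnm fa_gen_mono mono_mult assoc_mult_mat[of _ n n _ n _ n])

lemma S3: "good n (fa_sub (fa_mult (TT d) (EE H)) (EE H))"
  by (intro good_E fs_sub fs_mult fs_gen hasE_sub hasE_mult_right hasE_gen)

lemma S4: "good n (fa_sub (fa_mult (EE H) (TT d)) (EE H))"
  by (intro good_E fs_sub fs_mult fs_gen hasE_sub hasE_mult_left hasE_gen)

lemma S7: "good n (fa_sub (fa_mult (EE H) (EE H)) (fa_smult c (EE H)))"
  by (intro good_E fs_sub fs_mult fs_gen fs_smult hasE_sub hasE_mult_left hasE_gen hasE_smult)

lemma S8: "good n (fa_sub (fa_mult (TT w) (EE K)) (fa_mult (EE H) (TT w)))"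
  by (intro good_E fs_sub fs_mult fs_gen hasE_sub hasE_mult_right[of "EE K"] hasE_mult_left[of "EE H"] hasE_gen)

lemma S9: "good n (fa_sub (fa_mult (EE H) (EE K)) (fa_mult (EE K) (EE H)))"
  by (intro good_E fs_sub fs_mult fs_gen hasE_sub hasE_mult_left hasE_gen)

lemma S10: "finite R \<Longrightarrow> good n (fa_sub (fa_mult (EE H) (EE K)) (fa_mult (fa_lincomb mu TT R) (EE K)))"
  by (intro good_E fs_sub fs_mult fs_gen fs_lincomb hasE_sub hasE_mult_left[of "EE H"] hasE_mult_right[of "EE K"] hasE_gen)

lemma S11: "finite R \<Longrightarrow> good n (fa_sub (fa_mult (EE H) (EE K)) (fa_mult (EE H) (fa_lincomb mu TT R)))"
  by (intro good_E fs_sub fs_mult fs_gen fs_lincomb hasE_sub hasE_mult_left hasE_gen)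

lemma S12: "good n (fa_mult (EE H) (EE K))"
  by (intro good_E fs_mult fs_gen hasE_mult_left hasE_gen)

context
  fixes n :: nat and G :: "complex mat set" and mu :: "complex mat \<Rightarrow> complex"
    and tau :: "complex vec set \<Rightarrow> complex"
  assumes fprg: "finite_pseudo_reflection_group n G"
begin

lemma R_fin: "finite (R_between n G H K)"
  unfolding R_between_def
  by (rule finite_subset[of _ G]) (use refls_G[OF fprg] G_finite[OF fprg] in auto)

lemma rel_good: "r \<in> B_rels n G mu tau \<Longrightarrow> good n r"
  unfolding B_rels_def Un_iff
  apply (elim disjE)
  using S1 S2[OF G_carrier[OF fprg] G_carrier[OF fprg]] S3 S4 S7 S8 S9 S10[OF R_fin] S11[OF R_fin] S12
  by auto

lemma ideal_good: "x \<in> fa_ideal (B_gens n G) (B_rels n G mu tau) \<Longrightarrow> good n x"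
proof (induction x rule: fa_ideal.induct)
  case (base r)
  then show ?case by (rule rel_good)
next
  case zero
  then show ?case unfolding good_def by (simp add: fs_zero Phi_zero)
next
  case (add x y)
  then show ?case unfolding good_def by (simp add: fs_add Phi_add)
next
  case (smult x c)
  then show ?case unfolding good_def by (simp add: fs_smult Phi_smult)
next
  case (lmult a x)
  have fa: "fs a" using lmult.hyps(1) unfolding FA_def fs_def by simp
  show ?case using lmult.IH fa unfolding good_def by (auto intro: fs_mult Phi_lmult)
next
  case (rmult a x)
  have fa: "fs a" using rmult.hyps(1) unfolding FA_def fs_def by simp
  have fx: "fs x" using rmult.IH unfolding good_def by simp
  have "Phi (fa_mult x a) q m = 0" if q: "q \<in> carrier_mat n n" for q m
  proof (rule Phi_rmult[OF fa fx])
    fix v q' m assume v: "a v \<noteq> 0" and e: "evf v q = Some q'"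
    have "set v \<subseteq> Tg ` G \<union> Eg ` hyps n G" using rmult.hyps(1) v unfolding FA_def B_gens_def by blast
    hence "q' \<in> carrier_mat n n" using evf_carrier[OF _ _ q e] G_carrier[OF fprg] by blast
    thus "Phi x q' m = 0" using rmult.IH unfolding good_def by blast
  qed
  thus ?case using fa fx unfolding good_def by (simp add: fs_mult)
qed

lemma injective:
  assumes "fa_lincomb c TT G \<in> B_ideal n G mu tau" "w \<in> G"
  shows "c w = 0"
proof -
  have g: "good n (fa_lincomb c TT G)" using ideal_good assms(1) unfolding B_ideal_def by blast
  have one: "1\<^sub>m n \<in> carrier_mat n n" by simp
  have "0 = Phi (fa_lincomb c TT G) (1\<^sub>m n) w" using g one unfolding good_def by simp
  also have "\<dots> = (\<Sum>g\<in>G. c g * Phi (TT g) (1\<^sub>m n) w)"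
    by (rule Phi_lincomb[OF G_finite[OF fprg] fs_gen])
  also have "\<dots> = (\<Sum>g\<in>G. if g = w then c g else 0)"
  proof (rule sum.cong[OF refl])
    fix g assume "g \<in> G"
    hence "g * 1\<^sub>m n = g" using right_mult_one_mat G_carrier[OF fprg] by blast
    thus "c g * Phi (TT g) (1\<^sub>m n) w = (if g = w then c g else 0)"
      by (simp add: fa_gen_mono Phi_mnm)
  qed
  also have "\<dots> = c w" using G_finite[OF fprg] assms(2) by simp
  finally show ?thesis by simp
qed

end


theorem theorem5p1:
  fixes n :: nat and G :: "complex mat set"
    and mu :: "complex mat \<Rightarrow> complex" and tau :: "complex vec set \<Rightarrow> complex"
  assumes "finite_pseudo_reflection_group n G"
    and "admissible n G mu tau"
  shows "(\<exists>S. finite S \<and> S \<subseteq> FA (B_gens n G) \<and>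
            (\<forall>f \<in> FA (B_gens n G). \<exists>c. fa_sub f (fa_lincomb c (\<lambda>b. b) S) \<in> B_ideal n G mu tau))
       \<and> fa_sub (TT (1\<^sub>m n)) fa_one \<in> B_ideal n G mu tau
       \<and> (\<forall>w1\<in>G. \<forall>w2\<in>G. fa_sub (fa_mult (TT w1) (TT w2)) (TT (w1 * w2)) \<in> B_ideal n G mu tau)
       \<and> (\<forall>c :: complex mat \<Rightarrow> complex.
            fa_lincomb c TT G \<in> B_ideal n G mu tau \<longrightarrow> (\<forall>w\<in>G. c w = 0))"
proof (intro conjI)
  note fprg = assms(1)
  let ?S = "NF n G (card (hyps n G))"
  have "\<forall>f \<in> FA (B_gens n G). \<exists>c. fa_sub f (fa_lincomb c (\<lambda>b. b) ?S) \<in> B_ideal n G mu tau"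
  proof
    fix f assume f: "f \<in> FA (B_gens n G)"
    show "\<exists>c. fa_sub f (fa_lincomb c (\<lambda>b. b) ?S) \<in> B_ideal n G mu tau"
      unfolding B_ideal_def
      by (rule SP_finite[OF spanning[OF fprg f] NF_finite[OF fprg]])
  qed
  thus "\<exists>S. finite S \<and> S \<subseteq> FA (B_gens n G) \<and>
            (\<forall>f \<in> FA (B_gens n G). \<exists>c. fa_sub f (fa_lincomb c (\<lambda>b. b) S) \<in> B_ideal n G mu tau)"
    using NF_finite[OF fprg] NF_FA[OF fprg] by blast
  show "fa_sub (TT (1\<^sub>m n)) fa_one \<in> B_ideal n G mu tau"
    unfolding B_ideal_def
  proof (rule fa_ideal.base)
    show "fa_sub (TT (1\<^sub>m n)) fa_one \<in> B_rels n G mu tau"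
      unfolding B_rels_def Un_iff
      apply (rule disjI1, rule disjI1, rule disjI1, rule disjI1, rule disjI1, rule disjI1)
      apply (rule disjI1, rule disjI1, rule disjI1, rule disjI1, rule disjI1)
      by simp
  qed
  show "\<forall>w1\<in>G. \<forall>w2\<in>G. fa_sub (fa_mult (TT w1) (TT w2)) (TT (w1 * w2)) \<in> B_ideal n G mu tau"
  proof (intro ballI)
    fix w1 w2 assume a: "w1 \<in> G" "w2 \<in> G"
    show "fa_sub (fa_mult (TT w1) (TT w2)) (TT (w1 * w2)) \<in> B_ideal n G mu tau"
      unfolding B_ideal_def
    proof (rule fa_ideal.base)
      show "fa_sub (fa_mult (TT w1) (TT w2)) (TT (w1 * w2)) \<in> B_rels n G mu tau"
        unfolding B_rels_def Un_iff
        apply (rule disjI1, rule disjI1, rule disjI1, rule disjI1, rule disjI1, rule disjI1)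
        apply (rule disjI1, rule disjI1, rule disjI1, rule disjI1, rule disjI2)
        using a by blast
    qed
  qed
  show "\<forall>c :: complex mat \<Rightarrow> complex.
            fa_lincomb c TT G \<in> B_ideal n G mu tau \<longrightarrow> (\<forall>w\<in>G. c w = 0)"
    using injective[OF fprg] by blast
qed

end
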